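(* Let $\Omega\subset\mathbb{R}^n$ ($n\in\{2,3\}$) be a bounded polygonal/polyhedral Lipschitz domain, $f\in L^2(\Omega)$, $g\in H^1(\Omega)\cap C(\overline\Omega)$ with $g\le0$ on $\partial\Omega$, and $\mathcal T$ a conforming simplicial mesh. Let $(\boldsymbol\sigma_h,\lambda_h,u_h)\in K_h\times M_h$ be the solution of the discrete problem $$(\boldsymbol\sigma_h,\boldsymbol\tau_h-\boldsymbol\sigma_h)_\Omega+(\operatorname{div}(\boldsymbol\tau_h-\boldsymbol\sigma_h)+\mu_h-\lambda_h,u_h)_\Omega\ge(\mu_h-\lambda_h,g)_\Omega\ \ \forall(\boldsymbol\tau_h,\mu_h)\in K_h,\qquad (\operatorname{div}\boldsymbol\sigma_h+\lambda_h,v_h)_\Omega=-(f,v_h)_\Omega\ \ \forall v_h\in M_h.$$ Then: (i) $\operatorname{div}\boldsymbol\sigma_h+\lambda_h=-\Pi_h^0f$; (ii) $(\boldsymbol\sigma_h,\boldsymbol\tau_h)_\Omega+(\operatorname{div}\boldsymbol\tau_h,u_h)_\Omega=0$ for all $\boldsymbol\tau_h\in\mathrm{RT}^0(\mathcal T)$; (iii) $(\lambda_h,u_h-g)_\Omega=0$, or equivalently $\lambda_h(x)\,(u_h(x)-\Pi_h^0g(x))=0$ for a.e. $x\in\Omega$; (iv) $u_h-\Pi_h^0g\ge0$.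
   Context: $M_h:=\mathcal P^0(\mathcal T)$ (piecewise constants), $V_h:=\mathrm{RT}^0(\mathcal T)\times\mathcal P^0(\mathcal T)$ with $\mathrm{RT}^0(\mathcal T)$ the lowest-order Raviart–Thomas space, $K_h:=\{(\boldsymbol\tau_h,\mu_h)\in V_h:\mu_h|_T\ge0\ \forall T\in\mathcal T\}$. $\Pi_h^0$ is the $L^2(\Omega)$-orthogonal projection onto $\mathcal P^0(\mathcal T)$. *)

theory Defs
  imports "HOL-Analysis.Analysis"
begin

definition pderiv_i :: "'n::finite \<Rightarrow> (real^'n \<Rightarrow> real) \<Rightarrow> real^'n \<Rightarrow> real" where
  "pderiv_i i \<phi> x = frechet_derivative \<phi> (at x) (axis i 1)"

definition grad :: "(real^'n::finite \<Rightarrow> real) \<Rightarrow> real^'n \<Rightarrow> real^'n" where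
  "grad \<phi> x = (\<chi> i. pderiv_i i \<phi> x)"

primrec Ck :: "nat \<Rightarrow> (real^'n::finite \<Rightarrow> real) \<Rightarrow> bool" where
  "Ck 0 f = continuous_on UNIV f"
| "Ck (Suc k) f = (continuous_on UNIV f \<and> (\<forall>x. f differentiable (at x)) \<and>
                    (\<forall>i. Ck k (pderiv_i i f)))"

definition smooth_fun :: "(real^'n::finite \<Rightarrow> real) \<Rightarrow> bool" where
  "smooth_fun f \<longleftrightarrow> (\<forall>k. Ck k f)"

definition test_fun :: "(real^'n::finite) set \<Rightarrow> (real^'n \<Rightarrow> real) \<Rightarrow> bool" where
  "test_fun \<Omega> \<phi> \<longleftrightarrow> smooth_fun \<phi> \<and> compact (closure {x. \<phi> x \<noteq> 0})
                       \<and> closure {x. \<phi> x \<noteq> 0} \<subseteq> \<Omega>"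

definition L2 :: "(real^'n::finite) set \<Rightarrow> (real^'n \<Rightarrow> real) \<Rightarrow> bool" where
  "L2 \<Omega> f \<longleftrightarrow> f \<in> borel_measurable (lebesgue_on \<Omega>) \<and> integrable (lebesgue_on \<Omega>) (\<lambda>x. (f x)\<^sup>2)"

definition L2v :: "(real^'n::finite) set \<Rightarrow> (real^'n \<Rightarrow> real^'n) \<Rightarrow> bool" where
  "L2v \<Omega> \<sigma> \<longleftrightarrow> (\<forall>i. L2 \<Omega> (\<lambda>x. \<sigma> x $ i))"

definition ip :: "(real^'n::finite) set \<Rightarrow> (real^'n \<Rightarrow> real) \<Rightarrow> (real^'n \<Rightarrow> real) \<Rightarrow> real" where
  "ip \<Omega> u v = (LINT x|lebesgue_on \<Omega>. u x * v x)"

definition ipv :: "(real^'n::finite) set \<Rightarrow> (real^'n \<Rightarrow> real^'n) \<Rightarrow> (real^'n \<Rightarrow> real^'n) \<Rightarrow> real" where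
  "ipv \<Omega> \<sigma> \<tau> = (LINT x|lebesgue_on \<Omega>. \<sigma> x \<bullet> \<tau> x)"

definition has_weak_grad :: "(real^'n::finite) set \<Rightarrow> (real^'n \<Rightarrow> real) \<Rightarrow> (real^'n \<Rightarrow> real^'n) \<Rightarrow> bool" where
  "has_weak_grad \<Omega> g G \<longleftrightarrow> (\<forall>\<phi> i. test_fun \<Omega> \<phi> \<longrightarrow>
      (LINT x|lebesgue_on \<Omega>. g x * pderiv_i i \<phi> x) = - (LINT x|lebesgue_on \<Omega>. G x $ i * \<phi> x))"

definition H1 :: "(real^'n::finite) set \<Rightarrow> (real^'n \<Rightarrow> real) set" where
  "H1 \<Omega> = {g. L2 \<Omega> g \<and> (\<exists>G. L2v \<Omega> G \<and> has_weak_grad \<Omega> g G)}"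

definition has_weak_div :: "(real^'n::finite) set \<Rightarrow> (real^'n \<Rightarrow> real^'n) \<Rightarrow> (real^'n \<Rightarrow> real) \<Rightarrow> bool" where
  "has_weak_div \<Omega> \<sigma> w \<longleftrightarrow> (\<forall>\<phi>. test_fun \<Omega> \<phi> \<longrightarrow>
      (LINT x|lebesgue_on \<Omega>. \<sigma> x \<bullet> grad \<phi> x) = - (LINT x|lebesgue_on \<Omega>. w x * \<phi> x))"

definition Hdiv :: "(real^'n::finite) set \<Rightarrow> (real^'n \<Rightarrow> real^'n) set" where
  "Hdiv \<Omega> = {\<sigma>. L2v \<Omega> \<sigma> \<and> (\<exists>w. L2 \<Omega> w \<and> has_weak_div \<Omega> \<sigma> w)}"

text \<open>div sigma (an L^2 function, unique up to null sets; a representative is chosen).\<close>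
definition wdiv :: "(real^'n::finite) set \<Rightarrow> (real^'n \<Rightarrow> real^'n) \<Rightarrow> real^'n \<Rightarrow> real" where
  "wdiv \<Omega> \<sigma> = (SOME w. L2 \<Omega> w \<and> has_weak_div \<Omega> \<sigma> w)"

text \<open>Lipschitz domain: open, bounded, connected, and locally (after a rigid rotation) the region
  below the graph of a Lipschitz function of the remaining n-1 coordinates.\<close>
definition lipschitz_domain :: "(real^'n::finite) set \<Rightarrow> bool" where
  "lipschitz_domain \<Omega> \<longleftrightarrow> open \<Omega> \<and> bounded \<Omega> \<and> connected \<Omega> \<and> \<Omega> \<noteq> {} \<and>
     (\<forall>x\<in>frontier \<Omega>. \<exists>Q r C (\<gamma>::real^'n \<Rightarrow> real) k.
         orthogonal_transformation Q \<and> r > 0 \<and> C-lipschitz_on UNIV \<gamma> \<and>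
         (\<forall>z t. \<gamma> (z + t *\<^sub>R axis k 1) = \<gamma> z) \<and>
         \<Omega> \<inter> ball x r = {y \<in> ball x r. Q (y - x) $ k < \<gamma> (Q (y - x))})"

definition conforming_simplicial_mesh :: "(real^'n::finite) set set \<Rightarrow> (real^'n) set \<Rightarrow> bool" where
  "conforming_simplicial_mesh \<T> \<Omega> \<longleftrightarrow> finite \<T> \<and> \<T> \<noteq> {} \<and>
     (\<forall>T\<in>\<T>. int CARD('n) simplex T) \<and>
     \<Union>\<T> = closure \<Omega> \<and>
     (\<forall>T1\<in>\<T>. \<forall>T2\<in>\<T>. (T1 \<inter> T2) face_of T1 \<and> (T1 \<inter> T2) face_of T2)"

text \<open>P^0(T): piecewise constants (values on the null set of element boundaries are irrelevant).\<close>
definition P0 :: "(real^'n::finite) set set \<Rightarrow> (real^'n \<Rightarrow> real) set" where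
  "P0 \<T> = {v. \<forall>T\<in>\<T>. \<exists>c. \<forall>x\<in>interior T. v x = c}"

definition RT0 :: "(real^'n::finite) set set \<Rightarrow> (real^'n) set \<Rightarrow> (real^'n \<Rightarrow> real^'n) set" where
  "RT0 \<T> \<Omega> = {\<sigma> \<in> Hdiv \<Omega>. \<forall>T\<in>\<T>. \<exists>a b. \<forall>x\<in>interior T. \<sigma> x = a + b *\<^sub>R x}"

definition Kh :: "(real^'n::finite) set set \<Rightarrow> (real^'n) set \<Rightarrow> ((real^'n \<Rightarrow> real^'n) \<times> (real^'n \<Rightarrow> real)) set" where
  "Kh \<T> \<Omega> = {(\<tau>, \<mu>). \<tau> \<in> RT0 \<T> \<Omega> \<and> \<mu> \<in> P0 \<T> \<and> (\<forall>T\<in>\<T>. \<forall>x\<in>interior T. \<mu> x \<ge> 0)}"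

definition Pi0 :: "(real^'n::finite) set set \<Rightarrow> (real^'n) set \<Rightarrow> (real^'n \<Rightarrow> real) \<Rightarrow> real^'n \<Rightarrow> real" where
  "Pi0 \<T> \<Omega> f = (SOME p. p \<in> P0 \<T> \<and> (\<forall>v\<in>P0 \<T>. ip \<Omega> (\<lambda>x. f x - p x) v = 0))"

end

theory Submission
  imports Defs "HOL-Computational_Algebra.Polynomial"
begin

lemma pd_eq: "(f has_derivative D) (at x) \<Longrightarrow> pderiv_i i f x = D (axis i 1)"
  unfolding pderiv_i_def by (metis frechet_derivative_at)

lemma Ck_cont: "Ck k f \<Longrightarrow> continuous_on UNIV f"
  by (cases k) auto

lemma Ck_SucD: "Ck (Suc k) f \<Longrightarrow> Ck k f"
proof (induction k arbitrary: f)
  case 0 then show ?case by simp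
next
  case (Suc k) then show ?case by (metis Ck.simps(2))
qed


lemma Ck_add:
  fixes f g :: "real^'n::finite \<Rightarrow> real"
  shows "Ck k f \<Longrightarrow> Ck k g \<Longrightarrow> Ck k (\<lambda>x. f x + g x)"
proof (induction k arbitrary: f g)
  case 0 then show ?case by (auto intro: continuous_intros)
next
  case (Suc k)
  have df: "\<And>x. f differentiable (at x)" and dg: "\<And>x. g differentiable (at x)" using Suc.prems by auto
  have eq: "pderiv_i i (\<lambda>x. f x + g x) = (\<lambda>x. pderiv_i i f x + pderiv_i i g x)" for i
  proof
    fix x
    have "((\<lambda>x. f x + g x) has_derivative (\<lambda>h. frechet_derivative f (at x) h + frechet_derivative g (at x) h)) (at x)"
      using df dg by (intro has_derivative_add frechet_derivative_works[THEN iffD1]) auto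
    from pd_eq[OF this] show "pderiv_i i (\<lambda>x. f x + g x) x = pderiv_i i f x + pderiv_i i g x"
      by (simp add: pderiv_i_def)
  qed
  show ?case using Suc df dg by (auto simp: eq intro!: continuous_intros)
qed

lemma Ck_mult:
  fixes f g :: "real^'n::finite \<Rightarrow> real"
  shows "Ck k f \<Longrightarrow> Ck k g \<Longrightarrow> Ck k (\<lambda>x. f x * g x)"
proof (induction k arbitrary: f g)
  case 0 then show ?case by (auto intro: continuous_intros)
next
  case (Suc k)
  have df: "\<And>x. f differentiable (at x)" and dg: "\<And>x. g differentiable (at x)" using Suc.prems by auto
  have eq: "pderiv_i i (\<lambda>x. f x * g x) = (\<lambda>x. f x * pderiv_i i g x + pderiv_i i f x * g x)" for i
  proof
    fix x
    have "((\<lambda>x. f x * g x) has_derivative (\<lambda>h. f x * frechet_derivative g (at x) h + frechet_derivative f (at x) h * g x)) (at x)"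
      using df dg by (intro has_derivative_mult frechet_derivative_works[THEN iffD1]) auto
    from pd_eq[OF this] show "pderiv_i i (\<lambda>x. f x * g x) x = f x * pderiv_i i g x + pderiv_i i f x * g x"
      by (simp add: pderiv_i_def)
  qed
  have "Ck k (\<lambda>x. f x * pderiv_i i g x + pderiv_i i f x * g x)" for i
    using Suc Ck_SucD[OF Suc.prems(1)] Ck_SucD[OF Suc.prems(2)] by (intro Ck_add Suc.IH) auto
  then show ?case using Suc df dg by (auto simp: eq intro!: continuous_intros)
qed

lemma Ck_const: "Ck k (\<lambda>x::real^'n::finite. c::real)"
proof (induction k arbitrary: c)
  case (Suc k)
  have eq: "pderiv_i i (\<lambda>x::real^'n. c) = (\<lambda>x. 0)" for i
    by (rule ext, subst pd_eq[OF has_derivative_const]) simp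
  show ?case using Suc by (simp add: eq)
qed simp

lemma Ck_coord: "Ck k (\<lambda>x::real^'n::finite. x $ j)"
proof (cases k)
  case (Suc m)
  have eq: "pderiv_i i (\<lambda>x::real^'n. x $ j) = (\<lambda>x. axis i 1 $ j)" for i
    by (rule ext, subst pd_eq[OF bounded_linear_imp_has_derivative[OF bounded_linear_vec_nth]]) simp
  show ?thesis using Suc by (auto simp: eq Ck_const intro!: continuous_intros bounded_linear_imp_differentiable bounded_linear_vec_nth)
qed (auto intro!: continuous_intros)

lemma Ck_comp:
  fixes F :: "real^'n::finite \<Rightarrow> real" and D :: "nat \<Rightarrow> real \<Rightarrow> real"
  assumes D: "\<And>j t. (D j has_real_derivative D (Suc j) t) (at t)"
  shows "Ck k F \<Longrightarrow> Ck k (\<lambda>x. D j (F x))"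
proof (induction k arbitrary: j F)
  have cD: "continuous_on UNIV (D j)" for j
    using D by (meson DERIV_isCont continuous_at_imp_continuous_on)
  {
    case 0 then show ?case using cD by (auto intro: continuous_on_compose2[OF cD])
  next
    case (Suc k)
    have dF: "\<And>x. F differentiable (at x)" using Suc.prems by auto
    have hd: "((\<lambda>x. D j (F x)) has_derivative (\<lambda>h. D (Suc j) (F x) * frechet_derivative F (at x) h)) (at x)" for x
    proof -
      have "(D j has_derivative (*) (D (Suc j) (F x))) (at (F x))"
        using D[of j "F x"] by (simp add: has_field_derivative_def)
      from diff_chain_at[OF frechet_derivative_works[THEN iffD1, OF dF] this] show ?thesis by (simp add: o_def)
    qed
    have eq: "pderiv_i i (\<lambda>x. D j (F x)) = (\<lambda>x. D (Suc j) (F x) * pderiv_i i F x)" for i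
      by (rule ext, subst pd_eq[OF hd]) (simp add: pderiv_i_def)
    have "Ck k (\<lambda>x. D (Suc j) (F x) * pderiv_i i F x)" for i
      using Suc Ck_SucD[OF Suc.prems] by (intro Ck_mult Suc.IH) auto
    moreover have "continuous_on UNIV (\<lambda>x. D j (F x))"
      using Suc.prems by (auto intro: continuous_on_compose2[OF cD] dest: Ck_cont)
    ultimately show ?case using hd by (auto simp: eq differentiable_def)
  }
qed

lemma Ck_prod:
  fixes f :: "'i \<Rightarrow> real^'n::finite \<Rightarrow> real"
  shows "finite I \<Longrightarrow> (\<And>i. i \<in> I \<Longrightarrow> Ck k (f i)) \<Longrightarrow> Ck k (\<lambda>x. \<Prod>i\<in>I. f i x)"
  by (induction I rule: finite_induct) (auto simp: Ck_const intro!: Ck_mult)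

lemma polyexp_tendsto: "((\<lambda>s. poly Q s * exp (-s)) \<longlongrightarrow> (0::real)) at_top"
proof -
  have "((\<lambda>s. \<Sum>i\<le>degree Q. coeff Q i * (s ^ i / exp s)) \<longlongrightarrow> (\<Sum>i\<le>degree Q. coeff Q i * 0)) at_top"
    by (intro tendsto_sum tendsto_mult tendsto_const tendsto_power_div_exp_0)
  moreover have "(\<lambda>s. \<Sum>i\<le>degree Q. coeff Q i * (s ^ i / exp s)) = (\<lambda>s. poly Q s * exp (-s))"
    by (rule ext) (simp add: poly_altdef sum_distrib_right exp_minus divide_inverse mult.assoc)
  ultimately show ?thesis by simp
qed

fun Pb :: "nat \<Rightarrow> real poly" where
  "Pb 0 = 1"
| "Pb (Suc j) = [:0,0,1:] * (Pb j - pderiv (Pb j))"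

definition Ed :: "nat \<Rightarrow> real \<Rightarrow> real" where
  "Ed j t = (if t > 0 then poly (Pb j) (1/t) * exp (-1/t) else 0)"

lemma Ed_deriv: "(Ed j has_real_derivative Ed (Suc j) t) (at t)"
proof -
  consider "t > 0" | "t < 0" | "t = 0" by linarith
  then show ?thesis
  proof cases
    case 1
    let ?P = "Pb j"
    have "((\<lambda>t. poly ?P (1/t) * exp (-1/t)) has_real_derivative
        (poly (pderiv ?P) (1/t) * (- 1 / t^2) * exp (-1/t) + poly ?P (1/t) * (exp (-1/t) * (1 / t^2)))) (at t)"
      using 1
      by (auto intro!: derivative_eq_intros DERIV_chain2[OF poly_DERIV] simp: power2_eq_square field_simps)
    moreover have "poly (pderiv ?P) (1/t) * (- 1 / t^2) * exp (-1/t) + poly ?P (1/t) * (exp (-1/t) * (1 / t^2))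
        = Ed (Suc j) t"
      using 1 by (simp add: Ed_def algebra_simps power2_eq_square)
    ultimately have d: "((\<lambda>t. poly ?P (1/t) * exp (-1/t)) has_real_derivative Ed (Suc j) t) (at t)" by simp
    show ?thesis
      by (rule has_field_derivative_transform_within_open[OF d, of "{0<..}"]) (use 1 in \<open>auto simp: Ed_def\<close>)
  next
    case 2
    have d: "((\<lambda>t. 0) has_real_derivative 0) (at t)" by simp
    have "Ed (Suc j) t = 0" using 2 by (simp add: Ed_def)
    then show ?thesis
      by (metis (no_types, lifting) d 2 has_field_derivative_transform_within_open[OF d, of "{..<0}" "Ed j"]
          Ed_def greaterThan_iff lessThan_iff less_asym open_lessThan)
  next
    case 3
    have E0: "Ed k 0 = 0" for k by (simp add: Ed_def)
    have "((\<lambda>h. Ed j h / h) \<longlongrightarrow> 0) (at_left 0)"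
    proof (rule tendsto_eventually)
      show "\<forall>\<^sub>F h in at_left 0. Ed j h / h = 0"
        by (rule eventually_mono[OF eventually_at_left_real[of "-1::real" 0]]) (auto simp: Ed_def)
    qed
    moreover have "((\<lambda>h. Ed j h / h) \<longlongrightarrow> 0) (at_right 0)"
    proof -
      have lim: "((\<lambda>s. poly (pCons 0 (Pb j)) s * exp (-s)) \<longlongrightarrow> 0) at_top" by (rule polyexp_tendsto)
      have lim2: "((\<lambda>h. poly (pCons 0 (Pb j)) (inverse h) * exp (- inverse h)) \<longlongrightarrow> 0) (at_right 0)"
        using filterlim_compose[OF lim filterlim_inverse_at_top_right] by (simp add: o_def)
      have ev: "\<forall>\<^sub>F h in at_right 0. poly (pCons 0 (Pb j)) (inverse h) * exp (- inverse h) = Ed j h / h"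
        by (rule eventually_at_rightI[of 0 1]) (auto simp: Ed_def field_simps)
      show ?thesis using tendsto_cong[OF ev] lim2 by simp
    qed
    ultimately have "((\<lambda>h. Ed j h / h) \<longlongrightarrow> 0) (at 0)" by (simp add: filterlim_at_split)
    then show ?thesis using 3 by (simp add: DERIV_def E0)
  qed
qed

lemma Ed0_nonneg: "Ed 0 t \<ge> 0" by (simp add: Ed_def)
lemma Ed0_pos_iff: "Ed 0 t > 0 \<longleftrightarrow> t > 0" by (simp add: Ed_def)
lemma Ed0_le1: "Ed 0 t \<le> 1" by (simp add: Ed_def)

lemma smooth_comp_Ed: "smooth_fun F \<Longrightarrow> smooth_fun (\<lambda>x. Ed j (F x))"
  unfolding smooth_fun_def by (auto intro: Ck_comp[where D=Ed, OF Ed_deriv])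

lemma Ck_diff:
  fixes f g :: "real^'n::finite \<Rightarrow> real"
  shows "Ck k f \<Longrightarrow> Ck k g \<Longrightarrow> Ck k (\<lambda>x. f x - g x)"
proof -
  assume "Ck k f" "Ck k g"
  then have "Ck k (\<lambda>x. f x + (-1) * g x)" by (intro Ck_add Ck_mult Ck_const)
  then show ?thesis by simp
qed

definition bumpB :: "real^'n::finite \<Rightarrow> real^'n \<Rightarrow> real^'n \<Rightarrow> real" where
  "bumpB a b x = (\<Prod>i\<in>UNIV. Ed 0 ((x$i - a$i) * (b$i - x$i)))"

definition psi :: "nat \<Rightarrow> real^'n::finite \<Rightarrow> real^'n \<Rightarrow> real^'n \<Rightarrow> real" where
  "psi m a b x = Ed 0 (real (Suc m) * bumpB a b x)"

lemma Ck_bumpB: "Ck k (bumpB a b)"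
proof -
  have "Ck k (\<lambda>x. \<Prod>i\<in>UNIV. Ed 0 ((x$i - a$i) * (b$i - x$i)))"
  proof (rule Ck_prod)
    fix i
    have "Ck k (\<lambda>x::real^'a. (x$i - a$i) * (b$i - x$i))"
      by (intro Ck_mult Ck_diff Ck_coord Ck_const)
    then show "Ck k (\<lambda>x. Ed 0 ((x$i - a$i) * (b$i - x$i)))"
      by (rule Ck_comp[where D=Ed, OF Ed_deriv])
  qed simp
  then show ?thesis unfolding bumpB_def[abs_def] by simp
qed

lemma smooth_psi: "smooth_fun (psi m a b)"
proof -
  have "Ck k (\<lambda>x. Ed 0 (real (Suc m) * bumpB a b x))" for k
    by (rule Ck_comp[where D=Ed, OF Ed_deriv]) (intro Ck_mult Ck_const Ck_bumpB)
  then show ?thesis unfolding smooth_fun_def psi_def[abs_def] by simp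
qed

lemma bumpB_nonneg: "bumpB a b x \<ge> 0"
  unfolding bumpB_def by (intro prod_nonneg) (simp add: Ed0_nonneg)

lemma bumpB_pos:
  fixes a b :: "real^'n::finite"
  assumes ne: "box a b \<noteq> {}"
  shows "bumpB a b x > 0 \<longleftrightarrow> x \<in> box a b"
proof -
  have ab: "a$i < b$i" for i
  proof -
    obtain y where "y \<in> box a b" using ne by blast
    then show ?thesis by (auto simp: mem_box_cart intro: order.strict_trans[of "a$i" "y$i"])
  qed
  have fac: "Ed 0 ((x$i - a$i) * (b$i - x$i)) > 0 \<longleftrightarrow> a$i < x$i \<and> x$i < b$i" for i
    using ab[of i] by (auto simp: Ed0_pos_iff zero_less_mult_iff)
  show ?thesis
  proof
    assume "bumpB a b x > 0"
    then have "(\<Prod>i\<in>UNIV. Ed 0 ((x$i - a$i) * (b$i - x$i))) \<noteq> 0"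
      unfolding bumpB_def by linarith
    then have "Ed 0 ((x$i - a$i) * (b$i - x$i)) \<noteq> 0" for i
      by (simp add: prod_zero_iff)
    then show "x \<in> box a b"
      using fac Ed0_nonneg by (auto simp: mem_box_cart order_less_le)
  next
    assume "x \<in> box a b"
    then show "bumpB a b x > 0"
      unfolding bumpB_def using fac by (intro prod_pos) (auto simp: mem_box_cart)
  qed
qed

lemma psi_nz:
  fixes a b :: "real^'n::finite"
  assumes ne: "box a b \<noteq> {}"
  shows "psi m a b x \<noteq> 0 \<longleftrightarrow> x \<in> box a b"
proof -
  have "psi m a b x \<noteq> 0 \<longleftrightarrow> real (Suc m) * bumpB a b x > 0"
    unfolding psi_def using Ed0_nonneg Ed0_pos_iff by (metis order_less_le)
  also have "\<dots> \<longleftrightarrow> bumpB a b x > 0" by (simp add: zero_less_mult_iff)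
  finally show ?thesis using bumpB_pos[OF ne] by simp
qed

lemma psi_bounds: "0 \<le> psi m a b x" "psi m a b x \<le> 1"
  unfolding psi_def by (auto simp: Ed0_nonneg Ed0_le1)

lemma psi_lim:
  fixes a b :: "real^'n::finite"
  assumes ne: "box a b \<noteq> {}"
  shows "(\<lambda>m. psi m a b x) \<longlonglongrightarrow> indicator (box a b) x"
proof (cases "x \<in> box a b")
  case True
  then have B: "bumpB a b x > 0" using bumpB_pos[OF ne] by simp
  have eq: "psi m a b x = exp (- (1 / bumpB a b x) * inverse (real (Suc m)))" for m
    using B by (simp add: psi_def Ed_def field_simps add_pos_nonneg)
  have "(\<lambda>m. exp (- (1 / bumpB a b x) * inverse (real (Suc m)))) \<longlonglongrightarrow> exp (- (1 / bumpB a b x) * 0)"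
    by (intro tendsto_intros LIMSEQ_inverse_real_of_nat)
  then show ?thesis using True by (simp add: eq)
next
  case False
  then have "psi m a b x = 0" for m using psi_nz[OF ne] by blast
  then show ?thesis using False by simp
qed

lemma psi_test:
  fixes a b :: "real^'n::finite"
  assumes ne: "box a b \<noteq> {}" and sub: "cbox a b \<subseteq> U"
  shows "test_fun U (psi m a b)"
proof -
  have "{x. psi m a b x \<noteq> 0} = box a b" using psi_nz[OF ne] by auto
  then have "closure {x. psi m a b x \<noteq> 0} = cbox a b" using ne by simp
  then show ?thesis unfolding test_fun_def using smooth_psi sub by simp
qed

lemma bor_leb_on: "f \<in> borel_measurable borel \<Longrightarrow> f \<in> borel_measurable (lebesgue_on S)"
  by (intro measurable_restrict_space1 measurable_completion) simp

lemma int_bdd_mult: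
  fixes f g :: "'a \<Rightarrow> real"
  assumes f: "integrable M f" and g: "g \<in> borel_measurable M" and C: "\<And>x. \<bar>g x\<bar> \<le> C"
  shows "integrable M (\<lambda>x. f x * g x)"
proof (rule Bochner_Integration.integrable_bound[where f="\<lambda>x. C * f x"])
  show "integrable M (\<lambda>x. C * f x)" using f by simp
  show "(\<lambda>x. f x * g x) \<in> borel_measurable M" using f g by (intro borel_measurable_times) auto
  show "AE x in M. norm (f x * g x) \<le> norm (C * f x)"
  proof (rule AE_I2)
    fix x
    have "\<bar>g x\<bar> \<le> \<bar>C\<bar>" using C[of x] by linarith
    then have "\<bar>f x\<bar> * \<bar>g x\<bar> \<le> \<bar>f x\<bar> * \<bar>C\<bar>" by (rule mult_left_mono) simp
    then show "norm (f x * g x) \<le> norm (C * f x)" by (simp add: abs_mult mult.commute)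
  qed
qed

lemma cs_bdd:
  fixes f :: "'a::metric_space \<Rightarrow> real"
  assumes "continuous_on UNIV f" "compact K" "\<And>x. x \<notin> K \<Longrightarrow> f x = 0"
  shows "\<exists>C. \<forall>x. \<bar>f x\<bar> \<le> C"
proof -
  have "compact (f ` K)" by (rule compact_continuous_image[OF continuous_on_subset[OF assms(1)] assms(2)]) simp
  then obtain B where B: "\<forall>y\<in>f ` K. norm y \<le> B" using compact_imp_bounded bounded_iff by metis
  have "\<bar>f x\<bar> \<le> max B 0" for x using B assms(3)[of x] by (cases "x \<in> K") force+
  then show ?thesis by blast
qed

lemma test_cont: "test_fun U \<phi> \<Longrightarrow> continuous_on UNIV \<phi>"
  unfolding test_fun_def smooth_fun_def by (metis Ck_cont)

lemma test_meas: "test_fun U \<phi> \<Longrightarrow> \<phi> \<in> borel_measurable (lebesgue_on S)"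
  by (intro bor_leb_on borel_measurable_continuous_onI test_cont)

lemma test_bdd: "test_fun U \<phi> \<Longrightarrow> \<exists>C. \<forall>x. \<bar>\<phi> x\<bar> \<le> C"
  by (rule cs_bdd[OF test_cont, of U \<phi> "closure {x. \<phi> x \<noteq> 0}"])
     (auto simp: test_fun_def intro: closure_subset[THEN subsetD])

lemma test_mono: "test_fun U \<phi> \<Longrightarrow> U \<subseteq> V \<Longrightarrow> test_fun V \<phi>"
  unfolding test_fun_def by blast

lemma FL_box:
  fixes w :: "real^'n::finite \<Rightarrow> real"
  assumes w: "integrable (lebesgue_on S) w"
    and H: "\<And>\<phi>. test_fun U \<phi> \<Longrightarrow> (LINT x|lebesgue_on S. w x * \<phi> x) = 0"
    and ne: "box a b \<noteq> {}" and sub: "cbox a b \<subseteq> U"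
  shows "(LINT x|lebesgue_on S. w x * indicator (box a b) x) = 0"
proof -
  have wm: "w \<in> borel_measurable (lebesgue_on S)" using w by auto
  have im: "indicator (box a b) \<in> borel_measurable (lebesgue_on S)"
    by (intro bor_leb_on borel_measurable_indicator) simp
  have lim: "(\<lambda>m. LINT x|lebesgue_on S. w x * psi m a b x) \<longlonglongrightarrow> (LINT x|lebesgue_on S. w x * indicator (box a b) x)"
  proof (rule integral_dominated_convergence[where w="\<lambda>x. norm (w x)"])
    show "(\<lambda>x. w x * indicator (box a b) x) \<in> borel_measurable (lebesgue_on S)"
      by (rule borel_measurable_times[OF wm im])
    show "(\<lambda>x. w x * psi m a b x) \<in> borel_measurable (lebesgue_on S)" for m
      by (rule borel_measurable_times[OF wm test_meas[OF psi_test[OF ne sub, of m]]])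
    show "integrable (lebesgue_on S) (\<lambda>x. norm (w x))" using w by simp
    show "AE x in lebesgue_on S. (\<lambda>m. w x * psi m a b x) \<longlonglongrightarrow> w x * indicator (box a b) x"
      by (intro AE_I2 tendsto_mult tendsto_const psi_lim[OF ne])
    show "AE x in lebesgue_on S. norm (w x * psi m a b x) \<le> norm (w x)" for m
    proof (rule AE_I2)
      fix x
      have "\<bar>w x\<bar> * \<bar>psi m a b x\<bar> \<le> \<bar>w x\<bar> * 1"
        using psi_bounds[of m a b x] by (intro mult_left_mono) auto
      then show "norm (w x * psi m a b x) \<le> norm (w x)" by (simp add: abs_mult)
    qed
  qed
  have "(LINT x|lebesgue_on S. w x * psi m a b x) = 0" for m
    using H[OF psi_test[OF ne sub]] .
  then have "(\<lambda>m. 0::real) \<longlonglongrightarrow> (LINT x|lebesgue_on S. w x * indicator (box a b) x)"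
    using lim by simp
  then show ?thesis using LIMSEQ_unique[OF tendsto_const] by metis
qed

lemma ae_zero_boxes:
  fixes h :: "real^'n::finite \<Rightarrow> real" and c d :: "real^'n"
  assumes hb: "h \<in> borel_measurable borel" and hi: "integrable lborel h"
    and Z: "\<And>a b. box a b \<noteq> {} \<Longrightarrow> cbox a b \<subseteq> cbox c d \<Longrightarrow> (LINT x|lborel. h x * indicator (box a b) x) = 0"
  shows "AE x in lborel. x \<in> box c d \<longrightarrow> h x = 0"
proof -
  let ?Q = "box c d"
  define hp where "hp x = max 0 (h x) * indicator ?Q x" for x
  define hm where "hm x = max 0 (- h x) * indicator ?Q x" for x
  have Qb: "indicator ?Q \<in> borel_measurable borel" by (intro borel_measurable_indicator) simp
  have hpb: "hp \<in> borel_measurable borel" unfolding hp_def[abs_def]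
    by (intro borel_measurable_times borel_measurable_max borel_measurable_const hb Qb)
  have hmb: "hm \<in> borel_measurable borel" unfolding hm_def[abs_def]
    by (intro borel_measurable_times borel_measurable_max borel_measurable_const borel_measurable_uminus hb Qb)
  have hpi: "integrable lborel hp"
    by (rule Bochner_Integration.integrable_bound[OF integrable_abs[OF hi]]) (use hpb in \<open>auto simp: hp_def split: split_indicator\<close>)
  have hmi: "integrable lborel hm"
    by (rule Bochner_Integration.integrable_bound[OF integrable_abs[OF hi]]) (use hmb in \<open>auto simp: hm_def split: split_indicator\<close>)
  have hpn: "hp x \<ge> 0" "hm x \<ge> 0" for x by (auto simp: hp_def hm_def)
  have Zall: "(LINT x|lborel. h x * indicator (box a b \<inter> ?Q) x) = 0" for a b
  proof (cases "box a b \<inter> ?Q = {}")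
    case True then show ?thesis by simp
  next
    case False
    obtain a' b' where ab': "box a b \<inter> ?Q = box a' b'" using box_Int_box by blast
    have "cbox a' b' = closure (box a' b')" using False ab' by simp
    also have "\<dots> \<subseteq> closure ?Q" using ab' by (intro closure_mono) auto
    also have "\<dots> \<subseteq> cbox c d" by (intro closure_minimal box_subset_cbox closed_cbox)
    finally show ?thesis using Z[of a' b'] False ab' by simp
  qed
  have eqint: "(LINT x|lborel. hp x * indicator (box a b) x) = (LINT x|lborel. hm x * indicator (box a b) x)" for a b
  proof -
    have "(LINT x|lborel. hp x * indicator (box a b) x) - (LINT x|lborel. hm x * indicator (box a b) x)
        = (LINT x|lborel. hp x * indicator (box a b) x - hm x * indicator (box a b) x)"
      by (rule Bochner_Integration.integral_diff[symmetric]) (auto intro!: integrable_real_mult_indicator hpi hmi)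
    also have "\<dots> = (LINT x|lborel. h x * indicator (box a b \<inter> ?Q) x)"
      by (rule Bochner_Integration.integral_cong) (auto simp: hp_def hm_def split: split_indicator)
    finally show ?thesis using Zall by simp
  qed
  have emeq: "emeasure (density lborel (\<lambda>x. ennreal (g x))) X = ennreal (LINT x|lborel. g x * indicator X x)"
    if "g \<in> borel_measurable borel" "integrable lborel g" "\<And>x. g x \<ge> 0" "X \<in> sets borel" for g X
  proof -
    have "emeasure (density lborel (\<lambda>x. ennreal (g x))) X = (\<integral>\<^sup>+ x. ennreal (g x) * indicator X x \<partial>lborel)"
      using that by (subst emeasure_density) auto
    also have "\<dots> = (\<integral>\<^sup>+ x. ennreal (g x * indicator X x) \<partial>lborel)"
      by (intro nn_integral_cong) (auto split: split_indicator)
    also have "\<dots> = ennreal (LINT x|lborel. g x * indicator X x)"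
      using that by (intro nn_integral_eq_integral integrable_real_mult_indicator) auto
    finally show ?thesis .
  qed
  have dens: "density lborel (\<lambda>x. ennreal (hp x)) = density lborel (\<lambda>x. ennreal (hm x))"
  proof (rule measure_eqI_generator_eq[where E="range (\<lambda>(a, b). box a b)" and \<Omega>=UNIV
        and A="\<lambda>n::nat. box (- (real n *\<^sub>R One)) (real n *\<^sub>R One)"])
    show "Int_stable (range (\<lambda>(a, b). box a b :: (real^'n) set))"
      by (auto simp: Int_stable_def box_Int_box)
    show "range (\<lambda>(a, b). box a b :: (real^'n) set) \<subseteq> Pow UNIV" by auto
    show "sets (density lborel (\<lambda>x. ennreal (hp x))) = sigma_sets UNIV (range (\<lambda>(a, b). box a b))"
      by (simp add: borel_eq_box)
    show "sets (density lborel (\<lambda>x. ennreal (hm x))) = sigma_sets UNIV (range (\<lambda>(a, b). box a b))"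
      by (simp add: borel_eq_box)
    show "range (\<lambda>n::nat. box (- (real n *\<^sub>R One)) (real n *\<^sub>R One)) \<subseteq> range (\<lambda>(a, b). box a b :: (real^'n) set)"
      by auto
    show "(\<Union>i::nat. box (- (real i *\<^sub>R One)) (real i *\<^sub>R One)) = (UNIV :: (real^'n) set)"
      unfolding UN_box_eq_UNIV by auto
    show "emeasure (density lborel (\<lambda>x. ennreal (hp x))) X = emeasure (density lborel (\<lambda>x. ennreal (hm x))) X"
      if "X \<in> range (\<lambda>(a, b). box a b)" for X
      using that eqint emeq[OF hpb hpi hpn(1)] emeq[OF hmb hmi hpn(2)] by auto
    show "emeasure (density lborel (\<lambda>x. ennreal (hp x))) (box (- (real i *\<^sub>R One)) (real i *\<^sub>R One)) \<noteq> \<infinity>" for i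
      using emeq[OF hpb hpi hpn(1)] by simp
  qed
  have fin: "integral\<^sup>N lborel (\<lambda>x. ennreal (hp x)) \<noteq> \<infinity>"
    using nn_integral_eq_integral[OF hpi] hpn by simp
  have "AE x in lborel. ennreal (hp x) = ennreal (hm x)"
    using finite_density_unique[THEN iffD1, OF _ _ _ _ fin dens] hpb hmb by auto
  then show ?thesis
  proof (rule AE_mp[OF _ AE_I2], intro impI)
    fix x assume "ennreal (hp x) = ennreal (hm x)" "x \<in> ?Q"
    then have "max 0 (h x) = max 0 (- h x)" using hpn[of x] by (simp add: hp_def hm_def)
    then show "h x = 0" by (simp add: max_def split: if_splits)
  qed
qed

lemma small_box:
  fixes x :: "real^'n::finite"
  assumes e: "e > 0"
  obtains c d where "x \<in> box c d" "cbox c d \<subseteq> ball x e"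
proof -
  define \<delta> where "\<delta> = e / (2 * real CARD('n))"
  have \<delta>: "\<delta> > 0" using e by (simp add: \<delta>_def)
  define c where "c = x - (\<chi> i. \<delta>)"
  define d where "d = x + (\<chi> i. \<delta>)"
  have "x \<in> box c d" using \<delta> by (simp add: mem_box_cart c_def d_def)
  moreover have "cbox c d \<subseteq> ball x e"
  proof
    fix y assume "y \<in> cbox c d"
    then have yi: "\<bar>(x - y)$i\<bar> \<le> \<delta>" for i
      by (auto simp: mem_box_cart c_def d_def abs_le_iff) (metis add.commute diff_le_eq le_diff_eq)+
    have "norm (x - y) \<le> (\<Sum>i\<in>UNIV. \<bar>(x - y)$i\<bar>)" by (rule norm_le_l1_cart)
    also have "\<dots> \<le> (\<Sum>i\<in>(UNIV::'n set). \<delta>)" by (intro sum_mono yi)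
    also have "\<dots> = e / 2" by (simp add: \<delta>_def)
    also have "\<dots> < e" using e by simp
    finally show "y \<in> ball x e" by (simp add: dist_norm)
  qed
  ultimately show ?thesis using that by blast
qed

lemma FL:
  fixes w :: "real^'n::finite \<Rightarrow> real"
  assumes S: "S \<in> sets lebesgue" and w: "integrable (lebesgue_on S) w" and U: "open U" "U \<subseteq> S"
    and H: "\<And>\<phi>. test_fun U \<phi> \<Longrightarrow> (LINT x|lebesgue_on S. w x * \<phi> x) = 0"
  shows "AE x in lebesgue_on S. x \<in> U \<longrightarrow> w x = 0"
proof -
  define w' where "w' x = indicator S x * w x" for x
  have w'i: "integrable lebesgue w'"
    using w integrable_restrict_space[of S lebesgue w] S by (simp add: w'_def[abs_def])
  obtain h where hb: "h \<in> borel_measurable lborel" and ae: "AE x in lborel. w' x = h x"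
    using completion_ex_borel_measurable_real[of w' lborel] w'i by auto
  have hb': "h \<in> borel_measurable borel" using hb by simp
  have hbL: "h \<in> borel_measurable lebesgue" using hb by (rule measurable_completion)
  have aeL: "AE x in lebesgue. w' x = h x" by (rule AE_completion[OF ae])
  have hiL: "integrable lebesgue h"
    using integrable_cong_AE[OF _ hbL aeL] w'i by auto
  have hi: "integrable lborel h" using integrable_completion[OF hb] hiL by simp
  have boxes: "(LINT x|lborel. h x * indicator (box a b) x) = 0"
    if ne: "box a b \<noteq> {}" and sub: "cbox a b \<subseteq> U" for a b
  proof -
    have ib: "indicator (box a b) \<in> borel_measurable lborel" by (intro borel_measurable_indicator) simp
    have "(LINT x|lborel. h x * indicator (box a b) x) = (LINT x|lebesgue. h x * indicator (box a b) x)"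
      by (rule integral_completion[symmetric]) (intro borel_measurable_times hb ib)
    also have "\<dots> = (LINT x|lebesgue. w' x * indicator (box a b) x)"
      using aeL w'i hbL measurable_completion[OF ib]
      by (intro integral_cong_AE borel_measurable_times) auto
    also have "\<dots> = (LINT x|lebesgue_on S. w x * indicator (box a b) x)"
      using S by (subst integral_restrict_space) (auto simp: w'_def mult.assoc)
    also have "\<dots> = 0" by (rule FL_box[OF w H ne sub])
    finally show ?thesis .
  qed
  define Zs where "Zs = {x\<in>U. h x \<noteq> 0}"
  have negZ: "negligible Zs"
  proof (rule locally_negligible_alt[THEN iffD2], intro ballI)
    fix x assume "x \<in> Zs"
    then have "x \<in> U" by (simp add: Zs_def)
    then obtain e where e: "e > 0" "ball x e \<subseteq> U" using U(1) by (meson openE)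
    obtain c d where cd: "x \<in> box c d" "cbox c d \<subseteq> ball x e" using small_box[OF e(1)] by blast
    have ae0: "AE y in lborel. y \<in> box c d \<longrightarrow> h y = 0"
      using e cd by (intro ae_zero_boxes[OF hb' hi] boxes) auto
    have Nm: "{y \<in> box c d. h y \<noteq> 0} \<in> sets lborel"
    proof -
      have "{y \<in> box c d. h y \<noteq> 0} = box c d \<inter> (h -` (UNIV - {0}) \<inter> space borel)" by auto
      also have "\<dots> \<in> sets borel" using hb' by (intro sets.Int measurable_sets) auto
      finally show ?thesis by simp
    qed
    have "emeasure lborel {y \<in> box c d. h y \<noteq> 0} = 0"
      using AE_iff_measurable[OF Nm, of "\<lambda>y. y \<in> box c d \<longrightarrow> h y = 0"] ae0 by auto
    then have "{y \<in> box c d. h y \<noteq> 0} \<in> null_sets lborel" using Nm by (simp add: null_sets_def)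
    then have "negligible {y \<in> box c d. h y \<noteq> 0}"
      by (simp add: negligible_iff_null_sets null_sets_completionI)
    moreover have "Zs \<inter> box c d \<subseteq> {y \<in> box c d. h y \<noteq> 0}" by (auto simp: Zs_def)
    ultimately have "negligible (Zs \<inter> box c d)" by (rule negligible_subset)
    then show "\<exists>V. openin (top_of_set Zs) V \<and> x \<in> V \<and> negligible V"
      using cd \<open>x \<in> Zs\<close> by (intro exI[of _ "Zs \<inter> box c d"]) auto
  qed
  have "AE x in lebesgue. x \<notin> Zs"
    using negZ by (intro AE_not_in) (simp add: negligible_iff_null_sets)
  then have "AE x in lebesgue. x \<in> S \<longrightarrow> x \<in> U \<longrightarrow> w x = 0"
    using aeL by eventually_elim (auto simp: Zs_def w'_def)
  then show ?thesis using S by (subst AE_restrict_space_iff) auto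
qed

lemma pd_zero_out:
  fixes \<psi> :: "real^'n::finite \<Rightarrow> real"
  assumes "x \<notin> closure {x. \<psi> x \<noteq> 0}"
  shows "pderiv_i i \<psi> x = 0"
proof -
  have "((\<lambda>x. 0) has_derivative (\<lambda>h. 0)) (at x)" by simp
  then have "(\<psi> has_derivative (\<lambda>h. 0)) (at x)"
    by (rule has_derivative_transform_within_open[of _ _ _ _ "- closure {x. \<psi> x \<noteq> 0}"])
       (use assms closure_subset[of "{x. \<psi> x \<noteq> 0}"] in auto)
  then show ?thesis by (simp add: pd_eq)
qed

lemma line_deriv:
  fixes \<psi> :: "real^'n::finite \<Rightarrow> real"
  assumes d: "\<And>x. \<psi> differentiable (at x)"
  shows "((\<lambda>s. \<psi> (y + s *\<^sub>R axis i 1)) has_real_derivative pderiv_i i \<psi> (y + s *\<^sub>R axis i 1)) (at s)"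
proof -
  let ?D = "frechet_derivative \<psi> (at (y + s *\<^sub>R axis i 1))"
  have D: "(\<psi> has_derivative ?D) (at (y + s *\<^sub>R axis i 1))"
    using d frechet_derivative_works by blast
  have L: "((\<lambda>s. y + s *\<^sub>R axis i 1) has_derivative (\<lambda>h. h *\<^sub>R axis i 1)) (at s)"
    by (auto intro!: derivative_eq_intros)
  have "((\<lambda>s. \<psi> (y + s *\<^sub>R axis i 1)) has_derivative (\<lambda>h. ?D (h *\<^sub>R axis i 1))) (at s)"
    using diff_chain_at[OF L D] by (simp add: o_def)
  moreover have "(\<lambda>h. ?D (h *\<^sub>R axis i 1)) = (*) (?D (axis i 1))"
    using has_derivative_linear[OF D] by (auto simp: linear_scale mult.commute)
  ultimately show ?thesis by (simp add: has_field_derivative_def pderiv_i_def)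
qed

lemma translate_integral:
  fixes f :: "real^'n::finite \<Rightarrow> real"
  assumes "f \<in> borel_measurable borel"
  shows "(LINT x|lborel. f (c + x)) = (LINT x|lborel. f x)"
proof -
  have "(LINT x|lborel. f x) = (LINT x|distr lborel borel ((+) c). f x)" by (simp add: lborel_distr_plus)
  also have "\<dots> = (LINT x|lborel. f (c + x))" using assms by (subst integral_distr) auto
  finally show ?thesis by simp
qed

lemma IBP0:
  fixes \<psi> :: "real^'n::finite \<Rightarrow> real"
  assumes C1: "Ck 1 \<psi>" and K: "compact (closure {x. \<psi> x \<noteq> 0})"
  shows "integrable lborel (pderiv_i i \<psi>) \<and> (LINT x|lborel. pderiv_i i \<psi> x) = 0"
proof -
  let ?K = "closure {x. \<psi> x \<noteq> 0}"
  let ?e = "axis i 1 :: real^'n"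
  let ?g = "pderiv_i i \<psi>"
  have C1': "Ck (Suc 0) \<psi>" using C1 by (simp only: One_nat_def)
  have cont: "continuous_on UNIV \<psi>" using C1'[unfolded Ck.simps] by blast
  have dif: "\<And>x. \<psi> differentiable (at x)" using C1'[unfolded Ck.simps] by blast
  have gc: "continuous_on UNIV ?g" using C1'[unfolded Ck.simps] by blast
  have g0: "x \<notin> ?K \<Longrightarrow> ?g x = 0" for x by (rule pd_zero_out)
  have p0: "x \<notin> ?K \<Longrightarrow> \<psi> x = 0" for x using closure_subset[of "{x. \<psi> x \<noteq> 0}"] by auto
  obtain M where M: "\<And>x. \<bar>?g x\<bar> \<le> M" using cs_bdd[OF gc K g0] by blast
  obtain M0 where M0: "\<And>x. \<bar>\<psi> x\<bar> \<le> M0" using cs_bdd[OF cont K p0] by blast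
  have "bounded ?K" using K by (rule compact_imp_bounded)
  then obtain R where R0: "R > 0" and Rb: "\<And>x. x \<in> ?K \<Longrightarrow> norm x \<le> R"
    unfolding bounded_pos by blast
  let ?B = "cball (0::real^'n) (R + 1)"
  have outK: "x \<notin> ?K" if "norm x > R" for x using Rb that by force
  have gb: "?g \<in> borel_measurable borel" by (rule borel_measurable_continuous_onI[OF gc])
  have pb: "\<psi> \<in> borel_measurable borel" by (rule borel_measurable_continuous_onI[OF cont])
  have Wi: "integrable lborel (\<lambda>x. indicator ?B x *\<^sub>R C)" for C :: real
    by (rule borel_integrable_compact) auto
  have gi: "integrable lborel ?g"
  proof (rule Bochner_Integration.integrable_bound[OF Wi[of M]])
    show "?g \<in> borel_measurable lborel" using gb by simp
    show "AE x in lborel. norm (?g x) \<le> norm (indicator ?B x *\<^sub>R M)"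
    proof (rule AE_I2)
      fix x
      show "norm (?g x) \<le> norm (indicator ?B x *\<^sub>R M)"
      proof (cases "x \<in> ?B")
        case True then show ?thesis using M[of x] by auto
      next
        case False then have "norm x > R" by auto
        then show ?thesis using g0[OF outK] by simp
      qed
    qed
  qed
  define h where "h k = inverse (real (Suc k))" for k
  have h0: "h k > 0" "h k \<le> 1" for k by (auto simp: h_def field_simps)
  define Q where "Q k x = (\<psi> (x + h k *\<^sub>R ?e) - \<psi> x) / h k" for k x
  have psh: "\<psi> (x + h k *\<^sub>R ?e) = 0" if "norm x > R + 1" for k x
  proof -
    have "norm (h k *\<^sub>R ?e) \<le> 1" using h0[of k] by simp
    then have "norm (x + h k *\<^sub>R ?e) > R" using that norm_triangle_ineq2[of x "- (h k *\<^sub>R ?e)"] by simp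
    then show ?thesis using p0[OF outK] by blast
  qed
  have Qbd: "\<bar>Q k x\<bar> \<le> indicator ?B x * M" for k x
  proof (cases "x \<in> ?B")
    case False
    then have "norm x > R + 1" by auto
    moreover then have "\<psi> x = 0" using p0[OF outK] by simp
    ultimately show ?thesis using psh False by (simp add: Q_def)
  next
    case True
    obtain z where z: "0 < z" "z < h k"
      "\<psi> (x + h k *\<^sub>R ?e) - \<psi> (x + 0 *\<^sub>R ?e) = (h k - 0) * ?g (x + z *\<^sub>R ?e)"
      using MVT2[OF h0(1)[of k], of "\<lambda>s. \<psi> (x + s *\<^sub>R ?e)" "\<lambda>s. ?g (x + s *\<^sub>R ?e)"]
        line_deriv[OF dif] by blast
    then have "Q k x = ?g (x + z *\<^sub>R ?e)" using h0[of k] by (simp add: Q_def)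
    then show ?thesis using True M by simp
  qed
  have Qb: "Q k \<in> borel_measurable borel" for k
    unfolding Q_def[abs_def] using pb by measurable
  have Qi: "integrable lborel (Q k)" for k
    by (rule Bochner_Integration.integrable_bound[OF Wi[of M]])
       (use Qb in \<open>auto intro!: AE_I2 order_trans[OF Qbd[of k] abs_ge_self] simp del: abs_mult\<close>)
  have pi: "integrable lborel \<psi>"
  proof (rule Bochner_Integration.integrable_bound[OF Wi[of M0]])
    show "\<psi> \<in> borel_measurable lborel" using pb by simp
    show "AE x in lborel. norm (\<psi> x) \<le> norm (indicator ?B x *\<^sub>R M0)"
    proof (rule AE_I2)
      fix x
      show "norm (\<psi> x) \<le> norm (indicator ?B x *\<^sub>R M0)"
      proof (cases "x \<in> ?B")
        case True then show ?thesis using M0[of x] by auto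
      next
        case False then have "norm x > R" by auto
        then show ?thesis using p0[OF outK] by simp
      qed
    qed
  qed
  have Q0: "(LINT x|lborel. Q k x) = 0" for k
  proof -
    have ti: "integrable lborel (\<lambda>x. \<psi> (x + h k *\<^sub>R ?e))"
    proof -
      have "integrable lborel (\<lambda>x. h k * Q k x + \<psi> x)" using Qi pi by auto
      moreover have "(\<lambda>x. h k * Q k x + \<psi> x) = (\<lambda>x. \<psi> (x + h k *\<^sub>R ?e))"
        using h0(1)[of k] by (auto simp: Q_def)
      ultimately show ?thesis by simp
    qed
    have "(LINT x|lborel. Q k x) = ((LINT x|lborel. \<psi> (x + h k *\<^sub>R ?e)) - (LINT x|lborel. \<psi> x)) / h k"
      unfolding Q_def using ti pi by (simp add: Bochner_Integration.integral_diff)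
    also have "(LINT x|lborel. \<psi> (x + h k *\<^sub>R ?e)) = (LINT x|lborel. \<psi> x)"
      using translate_integral[OF pb, of "h k *\<^sub>R ?e"] by (simp add: add.commute)
    finally show ?thesis by simp
  qed
  have Qlim: "(\<lambda>k. Q k x) \<longlonglongrightarrow> ?g x" for x
  proof -
    have "((\<lambda>s. \<psi> (x + s *\<^sub>R ?e)) has_real_derivative ?g (x + 0 *\<^sub>R ?e)) (at 0)"
      by (rule line_deriv[OF dif])
    then have "((\<lambda>s. (\<psi> (x + s *\<^sub>R ?e) - \<psi> x) / s) \<longlongrightarrow> ?g x) (at 0)"
      by (simp add: DERIV_def)
    moreover have "filterlim h (at 0) sequentially"
      unfolding filterlim_at h_def using LIMSEQ_inverse_real_of_nat by auto
    ultimately show ?thesis unfolding Q_def by (rule filterlim_compose[of _ _ "at 0", unfolded o_def])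
  qed
  have "(\<lambda>k. LINT x|lborel. Q k x) \<longlonglongrightarrow> (LINT x|lborel. ?g x)"
  proof (rule integral_dominated_convergence[where w="\<lambda>x. indicator ?B x *\<^sub>R M"])
    show "?g \<in> borel_measurable lborel" using gb by simp
    show "Q k \<in> borel_measurable lborel" for k using Qb by simp
    show "integrable lborel (\<lambda>x. indicator ?B x *\<^sub>R M)" by (rule Wi)
    show "AE x in lborel. (\<lambda>k. Q k x) \<longlonglongrightarrow> ?g x" using Qlim by simp
    show "AE x in lborel. norm (Q k x) \<le> indicator ?B x *\<^sub>R M" for k
      using Qbd by (simp add: mult.commute)
  qed
  then have "(\<lambda>k. 0::real) \<longlonglongrightarrow> (LINT x|lborel. ?g x)" using Q0 by simp
  then have "(LINT x|lborel. ?g x) = 0" using LIMSEQ_unique[OF tendsto_const] by metis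
  then show ?thesis using gi by simp
qed

lemma pd_mult:
  fixes f g :: "real^'n::finite \<Rightarrow> real"
  assumes "f differentiable (at x)" "g differentiable (at x)"
  shows "pderiv_i i (\<lambda>x. f x * g x) x = f x * pderiv_i i g x + pderiv_i i f x * g x"
proof -
  have "((\<lambda>x. f x * g x) has_derivative (\<lambda>h. f x * frechet_derivative g (at x) h + frechet_derivative f (at x) h * g x)) (at x)"
    using assms by (intro has_derivative_mult frechet_derivative_works[THEN iffD1]) auto
  from pd_eq[OF this] show ?thesis by (simp add: pderiv_i_def)
qed

lemma pd_coord: "pderiv_i i (\<lambda>x::real^'n::finite. x $ j) x = axis i 1 $ j"
  by (subst pd_eq[OF bounded_linear_imp_has_derivative[OF bounded_linear_vec_nth]]) simp

lemma cs_integrable: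
  fixes f :: "real^'n::finite \<Rightarrow> real"
  assumes "continuous_on UNIV f" "compact K" "\<And>x. x \<notin> K \<Longrightarrow> f x = 0"
  shows "integrable lborel f"
proof -
  have "integrable lborel (\<lambda>x. indicator K x *\<^sub>R f x)"
    by (rule borel_integrable_compact[OF assms(2) continuous_on_subset[OF assms(1)]]) simp
  moreover have "(\<lambda>x. indicator K x *\<^sub>R f x) = f" using assms(3) by (auto split: split_indicator)
  ultimately show ?thesis by simp
qed

lemma affine_div:
  fixes \<phi> :: "real^'n::finite \<Rightarrow> real" and a :: "real^'n" and b :: real
  assumes sm: "smooth_fun \<phi>" and K: "compact (closure {x. \<phi> x \<noteq> 0})"
  shows "(LINT x|lborel. (a + b *\<^sub>R x) \<bullet> grad \<phi> x) = - (real CARD('n) * b) * (LINT x|lborel. \<phi> x)"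
proof -
  let ?K = "closure {x. \<phi> x \<noteq> 0}"
  have C1: "Ck 1 \<phi>" using sm by (simp add: smooth_fun_def)
  have C1': "Ck (Suc 0) \<phi>" using C1 by (simp only: One_nat_def)
  have cont: "continuous_on UNIV \<phi>" using C1'[unfolded Ck.simps] by blast
  have dif: "\<And>x. \<phi> differentiable (at x)" using C1'[unfolded Ck.simps] by blast
  have p0: "x \<notin> ?K \<Longrightarrow> \<phi> x = 0" for x using closure_subset[of "{x. \<phi> x \<noteq> 0}"] by auto
  have phii: "integrable lborel \<phi>" by (rule cs_integrable[OF cont K p0])
  define \<psi> where "\<psi> i x = x $ i * \<phi> x" for i x
  have psiC: "Ck 1 (\<psi> i)" for i unfolding \<psi>_def by (intro Ck_mult Ck_coord C1)
  have psiK: "compact (closure {x. \<psi> i x \<noteq> 0})" for i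
  proof -
    have "closure {x. \<psi> i x \<noteq> 0} \<subseteq> ?K" by (intro closure_mono) (auto simp: \<psi>_def)
    then have "closure {x. \<psi> i x \<noteq> 0} = ?K \<inter> closure {x. \<psi> i x \<noteq> 0}" by blast
    then show ?thesis using compact_Int_closed[OF K closed_closure] by metis
  qed
  note I1 = IBP0[OF C1 K] and I2 = IBP0[OF psiC psiK]
  have dpsi: "pderiv_i i (\<psi> i) x = x $ i * pderiv_i i \<phi> x + \<phi> x" for i x
    unfolding \<psi>_def by (subst pd_mult) (auto simp: dif pd_coord bounded_linear_imp_differentiable bounded_linear_vec_nth)
  have pw: "(a + b *\<^sub>R x) \<bullet> grad \<phi> x = (\<Sum>i\<in>UNIV. a $ i * pderiv_i i \<phi> x + b * pderiv_i i (\<psi> i) x - b * \<phi> x)" for x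
    by (simp add: inner_vec_def grad_def dpsi algebra_simps)
  have "(LINT x|lborel. (a + b *\<^sub>R x) \<bullet> grad \<phi> x)
      = (\<Sum>i\<in>UNIV. LINT x|lborel. a $ i * pderiv_i i \<phi> x + b * pderiv_i i (\<psi> i) x - b * \<phi> x)"
    unfolding pw using I1 I2 phii by (intro Bochner_Integration.integral_sum) auto
  also have "\<dots> = (\<Sum>i\<in>(UNIV::'n set). - b * (LINT x|lborel. \<phi> x))"
  proof (rule sum.cong[OF refl])
    fix i :: 'n
    have "(LINT x|lborel. a $ i * pderiv_i i \<phi> x + b * pderiv_i i (\<psi> i) x - b * \<phi> x)
      = a $ i * (LINT x|lborel. pderiv_i i \<phi> x) + b * (LINT x|lborel. pderiv_i i (\<psi> i) x) - b * (LINT x|lborel. \<phi> x)"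
      using I1[of i] I2[of i] phii by simp
    then show "(LINT x|lborel. a $ i * pderiv_i i \<phi> x + b * pderiv_i i (\<psi> i) x - b * \<phi> x) = - b * (LINT x|lborel. \<phi> x)"
      using I1[of i] I2[of i] by simp
  qed
  also have "\<dots> = - (real CARD('n) * b) * (LINT x|lborel. \<phi> x)" by simp
  finally show ?thesis .
qed

definition cT :: "(real^'n::finite) set \<Rightarrow> (real^'n \<Rightarrow> real) \<Rightarrow> real" where
  "cT T v = v (SOME x. x \<in> interior T)"

definition pc :: "(real^'n::finite) set set \<Rightarrow> ((real^'n) set \<Rightarrow> real) \<Rightarrow> real^'n \<Rightarrow> real" where
  "pc \<T> c x = (\<Sum>T\<in>\<T>. c T * indicator (interior T) x)"

lemma P0_val:
  assumes "v \<in> P0 \<T>" "T \<in> \<T>" "x \<in> interior T"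
  shows "v x = cT T v"
proof -
  obtain c where c: "\<forall>y\<in>interior T. v y = c" using assms(1,2) unfolding P0_def by blast
  have "(SOME y. y \<in> interior T) \<in> interior T" using assms(3) by (rule someI)
  then show ?thesis using c assms(3) unfolding cT_def by simp
qed

lemma meas_ae_modify:
  fixes f g :: "real^'n::finite \<Rightarrow> real"
  assumes S: "S \<in> sets lebesgue" and f: "f \<in> borel_measurable (lebesgue_on S)"
    and ae: "AE x in lebesgue_on S. f x = g x"
  shows "g \<in> borel_measurable (lebesgue_on S)"
proof -
  obtain N where N0: "{x \<in> space (lebesgue_on S). f x \<noteq> g x} \<subseteq> N" "emeasure (lebesgue_on S) N = 0"
    "N \<in> sets (lebesgue_on S)"
    using AE_E[OF ae] by blast
  have N: "N \<in> null_sets (lebesgue_on S)" "{x \<in> space (lebesgue_on S). f x \<noteq> g x} \<subseteq> N"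
    using N0 by (auto intro: null_setsI)
  have NS: "N \<inter> S \<in> null_sets lebesgue"
    using N(1) S by (simp add: null_sets_restrict_space Int_absorb2)
  have sub: "A \<in> sets (lebesgue_on S)" if "A \<subseteq> N \<inter> S" for A
  proof -
    have "A \<in> null_sets lebesgue" using completion.complete2[OF that NS] .
    then have "A \<in> sets lebesgue" by auto
    moreover have "A = A \<inter> S" using that by auto
    ultimately show ?thesis by (metis sets_restrict_space_iff S space_lebesgue_on sets.Int_space_eq2 le_inf_iff that inf.orderE sets_lebesgue_on_refl subset_iff_psubset_eq sets_restrict_space_cong)
  qed
  show ?thesis
  proof (rule measurableI)
    show "g x \<in> space borel" for x by simp
    fix A :: "real set" assume A: "A \<in> sets borel"
    have eq: "g -` A \<inter> space (lebesgue_on S) = ((f -` A \<inter> space (lebesgue_on S)) - (N \<inter> S)) \<union> (g -` A \<inter> (N \<inter> S))"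
      using N(2) by auto
    have "f -` A \<inter> space (lebesgue_on S) \<in> sets (lebesgue_on S)" using f A by (rule measurable_sets)
    moreover have "N \<inter> S \<in> sets (lebesgue_on S)" by (rule sub) simp
    moreover have "g -` A \<inter> (N \<inter> S) \<in> sets (lebesgue_on S)" by (rule sub) auto
    ultimately show "g -` A \<inter> space (lebesgue_on S) \<in> sets (lebesgue_on S)"
      unfolding eq by auto
  qed
qed

lemma P0_add: "v \<in> P0 \<T> \<Longrightarrow> w \<in> P0 \<T> \<Longrightarrow> (\<lambda>x. v x + w x) \<in> P0 \<T>"
  unfolding P0_def by (auto) (metis)
lemma P0_diff: "v \<in> P0 \<T> \<Longrightarrow> w \<in> P0 \<T> \<Longrightarrow> (\<lambda>x. v x - w x) \<in> P0 \<T>"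
  unfolding P0_def by (auto) (metis)
lemma P0_const: "(\<lambda>x. c) \<in> P0 \<T>"
  unfolding P0_def by auto

locale meshctx =
  fixes \<Omega> :: "(real^'n::finite) set" and \<T> :: "(real^'n) set set"
  assumes mesh: "conforming_simplicial_mesh \<T> \<Omega>" and opn: "open \<Omega>" and bdd: "bounded \<Omega>"
begin

lemma finT: "finite \<T>" using mesh by (simp add: conforming_simplicial_mesh_def)
lemma simpT: "T \<in> \<T> \<Longrightarrow> int CARD('n) simplex T" using mesh by (simp add: conforming_simplicial_mesh_def)
lemma unionT: "\<Union>\<T> = closure \<Omega>" using mesh by (simp add: conforming_simplicial_mesh_def)
lemma faceT: "T1 \<in> \<T> \<Longrightarrow> T2 \<in> \<T> \<Longrightarrow> (T1 \<inter> T2) face_of T1"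
  using mesh by (simp add: conforming_simplicial_mesh_def)

lemma Om_lmeas: "\<Omega> \<in> lmeasurable" using lmeasurable_open[OF bdd opn] .
lemma Om_sets: "\<Omega> \<in> sets lebesgue" using Om_lmeas by (simp add: fmeasurableD)
lemma finm: "finite_measure (lebesgue_on \<Omega>)" using finite_measure_lebesgue_on[OF Om_lmeas] .

lemma int_const: "integrable (lebesgue_on \<Omega>) (\<lambda>x. c::real)"
  using finm finite_measure.integrable_const by blast

lemma int_disj:
  assumes "T \<in> \<T>" "T' \<in> \<T>" "x \<in> interior T" "x \<in> interior T'"
  shows "T = T'"
proof -
  have "x \<in> T \<inter> T'" using assms interior_subset by blast
  have "T \<subseteq> T \<inter> T'"
    using subset_of_face_of[OF faceT[OF assms(1,2)], of T] assms interior_subset_rel_interior interior_subset by blast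
  moreover have "T' \<subseteq> T' \<inter> T"
    using subset_of_face_of[OF faceT[OF assms(2,1)], of T'] assms interior_subset_rel_interior interior_subset by blast
  ultimately show ?thesis by blast
qed

lemma int_ne: "T \<in> \<T> \<Longrightarrow> interior T \<noteq> {}"
proof -
  assume T: "T \<in> \<T>"
  have aff: "aff_dim T = int DIM(real^'n)" using aff_dim_simplex[OF simpT[OF T]] by simp
  then have "affine hull T = UNIV" using aff_dim_eq_full by blast
  then have ri: "rel_interior T = interior T" by (rule rel_interior_interior)
  have "T \<noteq> {}" using simpT[OF T] simplex_empty by force
  then have "rel_interior T \<noteq> {}" using rel_interior_eq_empty[OF convex_simplex[OF simpT[OF T]]] by simp
  then show ?thesis using ri by simp
qed

lemma ae_in_int: "AE x in lebesgue_on \<Omega>. \<exists>T\<in>\<T>. x \<in> interior T"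
proof -
  define N where "N = \<Union>(frontier ` \<T>)"
  have "negligible N" unfolding N_def
    using finT by (auto intro!: negligible_Union negligible_convex_frontier convex_simplex simpT)
  then have "AE x in lebesgue. x \<notin> N" by (intro AE_not_in) (simp add: negligible_iff_null_sets)
  then have "AE x in lebesgue. x \<in> \<Omega> \<longrightarrow> (\<exists>T\<in>\<T>. x \<in> interior T)"
  proof (rule AE_mp[OF _ AE_I2], intro impI)
    fix x assume x: "x \<notin> N" "x \<in> \<Omega>"
    then obtain T where T: "T \<in> \<T>" "x \<in> T" using unionT closure_subset by blast
    have "closed T" using closed_simplex[OF simpT[OF T(1)]] .
    then have "x \<notin> frontier T \<Longrightarrow> x \<in> interior T" using T(2) by (simp add: frontier_def)
    then show "\<exists>T\<in>\<T>. x \<in> interior T" using x T unfolding N_def by blast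
  qed
  then show ?thesis using Om_sets by (subst AE_restrict_space_iff) auto
qed

definition mT :: "(real^'n) set \<Rightarrow> real" where
  "mT T = (LINT x|lebesgue_on \<Omega>. indicator (interior T) x)"

lemma mT_eq: "mT T = measure lebesgue (\<Omega> \<inter> interior T)"
proof -
  have "mT T = (LINT x|lebesgue. indicator \<Omega> x *\<^sub>R indicator (interior T) x)"
    unfolding mT_def using Om_sets by (subst integral_restrict_space) auto
  also have "\<dots> = (LINT x|lebesgue. indicator (\<Omega> \<inter> interior T) x)"
    by (rule Bochner_Integration.integral_cong) (auto split: split_indicator)
  also have "\<dots> = measure lebesgue (\<Omega> \<inter> interior T)"
  proof -
    have "\<Omega> \<inter> interior T \<in> lmeasurable"
      using bdd opn by (intro lmeasurable_open) (auto intro: bounded_subset)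
    then show ?thesis
      using Bochner_Integration.integral_indicator[of lebesgue "\<Omega> \<inter> interior T"] by simp
  qed
  finally show ?thesis .
qed

lemma mT_pos: "T \<in> \<T> \<Longrightarrow> mT T > 0"
proof -
  assume T: "T \<in> \<T>"
  obtain x where x: "x \<in> interior T" using int_ne[OF T] by blast
  have "x \<in> closure \<Omega>" using x T unionT interior_subset by blast
  then have ne: "interior T \<inter> \<Omega> \<noteq> {}"
    using open_Int_closure_eq_empty[of "interior T" \<Omega>] x by auto
  have lm: "\<Omega> \<inter> interior T \<in> lmeasurable"
    using bdd opn by (intro lmeasurable_open) (auto intro: bounded_subset)
  have "\<not> negligible (\<Omega> \<inter> interior T)"
    using ne opn by (intro open_not_negligible) auto
  then have "measure lebesgue (\<Omega> \<inter> interior T) \<noteq> 0" using lm negligible_iff_measure0 by blast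
  then show ?thesis using mT_eq by (simp add: order_less_le)
qed

lemma pc_val: "T \<in> \<T> \<Longrightarrow> x \<in> interior T \<Longrightarrow> pc \<T> c x = c T"
proof -
  assume T: "T \<in> \<T>" "x \<in> interior T"
  have "pc \<T> c x = (\<Sum>T'\<in>\<T>. if T' = T then c T else 0)"
    unfolding pc_def using T int_disj by (intro sum.cong) (auto split: split_indicator)
  then show ?thesis using T finT by simp
qed

lemma pc_meas: "pc \<T> c \<in> borel_measurable (lebesgue_on S)"
  unfolding pc_def[abs_def] by (intro bor_leb_on borel_measurable_sum borel_measurable_times borel_measurable_const borel_measurable_indicator) auto

lemma pc_bdd: "\<bar>pc \<T> c x\<bar> \<le> (\<Sum>T\<in>\<T>. \<bar>c T\<bar>)"
  unfolding pc_def by (rule order_trans[OF sum_abs sum_mono]) (auto split: split_indicator)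

lemma P0_ae: "v \<in> P0 \<T> \<Longrightarrow> AE x in lebesgue_on \<Omega>. v x = pc \<T> (\<lambda>T. cT T v) x"
  using ae_in_int by eventually_elim (auto simp: pc_val P0_val)

lemma P0_meas: "v \<in> P0 \<T> \<Longrightarrow> v \<in> borel_measurable (lebesgue_on \<Omega>)"
  using meas_ae_modify[OF Om_sets pc_meas, of "\<lambda>T. cT T v" v] P0_ae by (metis (mono_tags, lifting) AE_cong)

lemma P0_int_mult:
  assumes v: "v \<in> P0 \<T>" and F: "integrable (lebesgue_on \<Omega>) F"
  shows "integrable (lebesgue_on \<Omega>) (\<lambda>x. v x * F x)"
proof -
  have "integrable (lebesgue_on \<Omega>) (\<lambda>x. F x * pc \<T> (\<lambda>T. cT T v) x)"
    by (rule int_bdd_mult[OF F pc_meas pc_bdd])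
  moreover have "AE x in lebesgue_on \<Omega>. F x * pc \<T> (\<lambda>T. cT T v) x = v x * F x"
    using P0_ae[OF v] by eventually_elim simp
  moreover have "(\<lambda>x. v x * F x) \<in> borel_measurable (lebesgue_on \<Omega>)"
    using P0_meas[OF v] F by (intro borel_measurable_times) auto
  moreover have "(\<lambda>x. F x * pc \<T> (\<lambda>T. cT T v) x) \<in> borel_measurable (lebesgue_on \<Omega>)"
    using F by (intro borel_measurable_times pc_meas) auto
  ultimately show ?thesis using integrable_cong_AE by blast
qed

lemma ip_P0:
  assumes v: "v \<in> P0 \<T>" and F: "integrable (lebesgue_on \<Omega>) F"
  shows "ip \<Omega> v F = (\<Sum>T\<in>\<T>. cT T v * (LINT x|lebesgue_on \<Omega>. indicator (interior T) x * F x))"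
proof -
  have iT: "integrable (lebesgue_on \<Omega>) (\<lambda>x. indicator (interior T) x * F x)" for T
  proof -
    have m: "indicator (interior T) \<in> borel_measurable (lebesgue_on \<Omega>)"
      by (intro bor_leb_on borel_measurable_indicator) simp
    have "integrable (lebesgue_on \<Omega>) (\<lambda>x. F x * indicator (interior T) x)"
      by (rule int_bdd_mult[OF F m, where C=1]) (simp split: split_indicator)
    then show ?thesis by (simp add: mult.commute)
  qed
  have "ip \<Omega> v F = (LINT x|lebesgue_on \<Omega>. pc \<T> (\<lambda>T. cT T v) x * F x)"
  proof -
    have "AE x in lebesgue_on \<Omega>. v x * F x = pc \<T> (\<lambda>T. cT T v) x * F x"
      using P0_ae[OF v] by eventually_elim simp
    then show ?thesis
      unfolding ip_def using P0_meas[OF v] F pc_meas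
      by (intro integral_cong_AE borel_measurable_times) auto
  qed
  also have "\<dots> = (LINT x|lebesgue_on \<Omega>. (\<Sum>T\<in>\<T>. cT T v * (indicator (interior T) x * F x)))"
    unfolding pc_def by (simp add: sum_distrib_right mult.assoc)
  also have "\<dots> = (\<Sum>T\<in>\<T>. cT T v * (LINT x|lebesgue_on \<Omega>. indicator (interior T) x * F x))"
    using iT by (simp add: Bochner_Integration.integral_sum)
  finally show ?thesis .
qed

lemma ind_P0: "T \<in> \<T> \<Longrightarrow> indicator (interior T) \<in> P0 \<T>"
  unfolding P0_def using int_disj by (auto split: split_indicator) (metis)+

lemma cT_ind: "T \<in> \<T> \<Longrightarrow> T' \<in> \<T> \<Longrightarrow> cT T' (indicator (interior T)) = (if T' = T then 1 else 0)"
proof -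
  assume T: "T \<in> \<T>" "T' \<in> \<T>"
  have "(SOME x. x \<in> interior T') \<in> interior T'" using int_ne[OF T(2)] some_in_eq by blast
  then show ?thesis unfolding cT_def using int_disj[OF T] by (auto split: split_indicator)
qed

end

lemma test_pd:
  fixes \<phi> :: "real^'n::finite \<Rightarrow> real"
  assumes "test_fun U \<phi>"
  shows "continuous_on UNIV (pderiv_i i \<phi>)" "\<exists>C. \<forall>x. \<bar>pderiv_i i \<phi> x\<bar> \<le> C"
proof -
  have C1': "Ck (Suc 0) \<phi>" using assms unfolding test_fun_def smooth_fun_def by blast
  show gc: "continuous_on UNIV (pderiv_i i \<phi>)" using C1'[unfolded Ck.simps] by blast
  show "\<exists>C. \<forall>x. \<bar>pderiv_i i \<phi> x\<bar> \<le> C"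
    by (rule cs_bdd[OF gc, of "closure {x. \<phi> x \<noteq> 0}"]) (use assms pd_zero_out in \<open>auto simp: test_fun_def\<close>)
qed

lemma grad_inner: "s \<bullet> grad \<phi> x = (\<Sum>i\<in>UNIV. s $ i * pderiv_i i \<phi> x)"
  by (simp add: inner_vec_def grad_def)

context meshctx
begin

lemma L2_int: "L2 \<Omega> f \<Longrightarrow> integrable (lebesgue_on \<Omega>) f"
  unfolding L2_def using finite_measure.square_integrable_imp_integrable[OF finm] by blast

lemma test_int_mult: "integrable (lebesgue_on \<Omega>) w \<Longrightarrow> test_fun U \<phi> \<Longrightarrow> integrable (lebesgue_on \<Omega>) (\<lambda>x. w x * \<phi> x)"
  using int_bdd_mult test_meas test_bdd by metis

lemma sig_grad_int:
  assumes s: "L2v \<Omega> \<sigma>" and t: "test_fun U \<phi>"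
  shows "integrable (lebesgue_on \<Omega>) (\<lambda>x. \<sigma> x \<bullet> grad \<phi> x)"
proof -
  have "integrable (lebesgue_on \<Omega>) (\<lambda>x. \<sigma> x $ i * pderiv_i i \<phi> x)" for i
  proof -
    obtain C where C: "\<And>x. \<bar>pderiv_i i \<phi> x\<bar> \<le> C" using test_pd(2)[OF t] by blast
    show ?thesis using s unfolding L2v_def
      by (intro int_bdd_mult[OF _ _ C] L2_int bor_leb_on borel_measurable_continuous_onI test_pd(1)[OF t]) auto
  qed
  then show ?thesis unfolding grad_inner by auto
qed

lemma L2_add:
  assumes "L2 \<Omega> f" "L2 \<Omega> g" shows "L2 \<Omega> (\<lambda>x. f x + g x)"
  unfolding L2_def
proof (intro conjI)
  have fm: "f \<in> borel_measurable (lebesgue_on \<Omega>)" and gm: "g \<in> borel_measurable (lebesgue_on \<Omega>)"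
    and fi: "integrable (lebesgue_on \<Omega>) (\<lambda>x. (f x)\<^sup>2)" and gi: "integrable (lebesgue_on \<Omega>) (\<lambda>x. (g x)\<^sup>2)"
    using assms unfolding L2_def by auto
  show "(\<lambda>x. f x + g x) \<in> borel_measurable (lebesgue_on \<Omega>)" using fm gm by (rule borel_measurable_add)
  show "integrable (lebesgue_on \<Omega>) (\<lambda>x. (f x + g x)\<^sup>2)"
  proof (rule Bochner_Integration.integrable_bound[where f="\<lambda>x. 2 * (f x)\<^sup>2 + 2 * (g x)\<^sup>2"])
    show "integrable (lebesgue_on \<Omega>) (\<lambda>x. 2 * (f x)\<^sup>2 + 2 * (g x)\<^sup>2)" using fi gi by auto
    show "(\<lambda>x. (f x + g x)\<^sup>2) \<in> borel_measurable (lebesgue_on \<Omega>)" using fm gm by measurable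
    show "AE x in lebesgue_on \<Omega>. norm ((f x + g x)\<^sup>2) \<le> norm (2 * (f x)\<^sup>2 + 2 * (g x)\<^sup>2)"
    proof (rule AE_I2)
      fix x
      have "0 \<le> (f x - g x)\<^sup>2" by simp
      then have "(f x + g x)\<^sup>2 \<le> 2 * (f x)\<^sup>2 + 2 * (g x)\<^sup>2"
        by (simp add: power2_eq_square algebra_simps)
      then show "norm ((f x + g x)\<^sup>2) \<le> norm (2 * (f x)\<^sup>2 + 2 * (g x)\<^sup>2)" by simp
    qed
  qed
qed

lemma L2_neg: "L2 \<Omega> f \<Longrightarrow> L2 \<Omega> (\<lambda>x. - f x)"
  unfolding L2_def by (auto intro: borel_measurable_uminus)

lemma wdiv_spec: "\<sigma> \<in> Hdiv \<Omega> \<Longrightarrow> L2 \<Omega> (wdiv \<Omega> \<sigma>) \<and> has_weak_div \<Omega> \<sigma> (wdiv \<Omega> \<sigma>)"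
proof -
  assume "\<sigma> \<in> Hdiv \<Omega>"
  then have "\<exists>w. L2 \<Omega> w \<and> has_weak_div \<Omega> \<sigma> w" unfolding Hdiv_def by blast
  then show ?thesis unfolding wdiv_def by (rule someI_ex)
qed

lemma weak_div_unique:
  assumes "has_weak_div \<Omega> \<sigma> w1" "has_weak_div \<Omega> \<sigma> w2" "L2 \<Omega> w1" "L2 \<Omega> w2"
  shows "AE x in lebesgue_on \<Omega>. w1 x = w2 x"
proof -
  have i1: "integrable (lebesgue_on \<Omega>) w1" and i2: "integrable (lebesgue_on \<Omega>) w2" using assms L2_int by auto
  have "AE x in lebesgue_on \<Omega>. x \<in> \<Omega> \<longrightarrow> w1 x - w2 x = 0"
  proof (rule FL[OF Om_sets _ opn order_refl])
    show "integrable (lebesgue_on \<Omega>) (\<lambda>x. w1 x - w2 x)" using i1 i2 by auto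
    fix \<phi> assume t: "test_fun \<Omega> \<phi>"
    have "(LINT x|lebesgue_on \<Omega>. (w1 x - w2 x) * \<phi> x) = (LINT x|lebesgue_on \<Omega>. w1 x * \<phi> x) - (LINT x|lebesgue_on \<Omega>. w2 x * \<phi> x)"
      using test_int_mult[OF i1 t] test_int_mult[OF i2 t] by (simp add: left_diff_distrib)
    also have "\<dots> = 0" using assms(1,2) t unfolding has_weak_div_def by force
    finally show "(LINT x|lebesgue_on \<Omega>. (w1 x - w2 x) * \<phi> x) = 0" .
  qed
  then show ?thesis using AE_space[of "lebesgue_on \<Omega>"] by eventually_elim auto
qed

end

context meshctx
begin

lemma Hdiv_add:
  assumes s: "\<sigma> \<in> Hdiv \<Omega>" and t: "\<tau> \<in> Hdiv \<Omega>"
  shows "(\<lambda>x. \<sigma> x + \<tau> x) \<in> Hdiv \<Omega>"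
proof -
  have ws: "L2 \<Omega> (wdiv \<Omega> \<sigma>)" "has_weak_div \<Omega> \<sigma> (wdiv \<Omega> \<sigma>)" using wdiv_spec[OF s] by auto
  have wt: "L2 \<Omega> (wdiv \<Omega> \<tau>)" "has_weak_div \<Omega> \<tau> (wdiv \<Omega> \<tau>)" using wdiv_spec[OF t] by auto
  have Ls: "L2v \<Omega> \<sigma>" and Lt: "L2v \<Omega> \<tau>" using s t by (auto simp: Hdiv_def)
  have L: "L2v \<Omega> (\<lambda>x. \<sigma> x + \<tau> x)" using Ls Lt unfolding L2v_def by (auto intro: L2_add)
  have "has_weak_div \<Omega> (\<lambda>x. \<sigma> x + \<tau> x) (\<lambda>x. wdiv \<Omega> \<sigma> x + wdiv \<Omega> \<tau> x)"
    unfolding has_weak_div_def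
  proof (intro allI impI)
    fix \<phi> assume tf: "test_fun \<Omega> \<phi>"
    have "(LINT x|lebesgue_on \<Omega>. (\<sigma> x + \<tau> x) \<bullet> grad \<phi> x)
        = (LINT x|lebesgue_on \<Omega>. \<sigma> x \<bullet> grad \<phi> x) + (LINT x|lebesgue_on \<Omega>. \<tau> x \<bullet> grad \<phi> x)"
      using sig_grad_int[OF Ls tf] sig_grad_int[OF Lt tf] by (simp add: inner_add_left)
    also have "\<dots> = - (LINT x|lebesgue_on \<Omega>. wdiv \<Omega> \<sigma> x * \<phi> x) - (LINT x|lebesgue_on \<Omega>. wdiv \<Omega> \<tau> x * \<phi> x)"
      using ws(2) wt(2) tf unfolding has_weak_div_def by simp
    also have "\<dots> = - (LINT x|lebesgue_on \<Omega>. (wdiv \<Omega> \<sigma> x + wdiv \<Omega> \<tau> x) * \<phi> x)"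
      using test_int_mult[OF L2_int[OF ws(1)] tf] test_int_mult[OF L2_int[OF wt(1)] tf]
      by (simp add: distrib_right)
    finally show "(LINT x|lebesgue_on \<Omega>. (\<sigma> x + \<tau> x) \<bullet> grad \<phi> x)
        = - (LINT x|lebesgue_on \<Omega>. (wdiv \<Omega> \<sigma> x + wdiv \<Omega> \<tau> x) * \<phi> x)" .
  qed
  then show ?thesis using L L2_add[OF ws(1) wt(1)] unfolding Hdiv_def by blast
qed

lemma Hdiv_neg:
  assumes s: "\<sigma> \<in> Hdiv \<Omega>"
  shows "(\<lambda>x. - \<sigma> x) \<in> Hdiv \<Omega>" "has_weak_div \<Omega> (\<lambda>x. - \<sigma> x) (\<lambda>x. - wdiv \<Omega> \<sigma> x)"
proof -
  have ws: "L2 \<Omega> (wdiv \<Omega> \<sigma>)" "has_weak_div \<Omega> \<sigma> (wdiv \<Omega> \<sigma>)" using wdiv_spec[OF s] by auto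
  have Ls: "L2v \<Omega> \<sigma>" using s by (auto simp: Hdiv_def)
  have L: "L2v \<Omega> (\<lambda>x. - \<sigma> x)" using Ls unfolding L2v_def by (auto intro: L2_neg)
  show hw: "has_weak_div \<Omega> (\<lambda>x. - \<sigma> x) (\<lambda>x. - wdiv \<Omega> \<sigma> x)"
    using ws(2) unfolding has_weak_div_def by simp
  show "(\<lambda>x. - \<sigma> x) \<in> Hdiv \<Omega>" using L L2_neg[OF ws(1)] hw unfolding Hdiv_def by blast
qed

lemma RT0_add:
  assumes s: "\<sigma> \<in> RT0 \<T> \<Omega>" and t: "\<tau> \<in> RT0 \<T> \<Omega>"
  shows "(\<lambda>x. \<sigma> x + \<tau> x) \<in> RT0 \<T> \<Omega>"
proof -
  have H: "(\<lambda>x. \<sigma> x + \<tau> x) \<in> Hdiv \<Omega>" using s t Hdiv_add unfolding RT0_def by blast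
  have "\<exists>a b. \<forall>x\<in>interior T. \<sigma> x + \<tau> x = a + b *\<^sub>R x" if T: "T \<in> \<T>" for T
  proof -
    obtain a1 b1 where 1: "\<forall>x\<in>interior T. \<sigma> x = a1 + b1 *\<^sub>R x" using s T unfolding RT0_def by blast
    obtain a2 b2 where 2: "\<forall>x\<in>interior T. \<tau> x = a2 + b2 *\<^sub>R x" using t T unfolding RT0_def by blast
    show ?thesis using 1 2 by (intro exI[of _ "a1 + a2"] exI[of _ "b1 + b2"]) (simp add: scaleR_add_left)
  qed
  then show ?thesis using H unfolding RT0_def by blast
qed

lemma RT0_neg:
  assumes s: "\<sigma> \<in> RT0 \<T> \<Omega>"
  shows "(\<lambda>x. - \<sigma> x) \<in> RT0 \<T> \<Omega>"
proof -
  have H: "(\<lambda>x. - \<sigma> x) \<in> Hdiv \<Omega>" using s Hdiv_neg(1) unfolding RT0_def by blast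
  have "\<exists>a b. \<forall>x\<in>interior T. - \<sigma> x = a + b *\<^sub>R x" if T: "T \<in> \<T>" for T
  proof -
    obtain a1 b1 where 1: "\<forall>x\<in>interior T. \<sigma> x = a1 + b1 *\<^sub>R x" using s T unfolding RT0_def by blast
    show ?thesis using 1 by (intro exI[of _ "- a1"] exI[of _ "- b1"]) simp
  qed
  then show ?thesis using H unfolding RT0_def by blast
qed

lemma wdiv_neg_ae: "\<tau> \<in> Hdiv \<Omega> \<Longrightarrow> AE x in lebesgue_on \<Omega>. wdiv \<Omega> (\<lambda>y. - \<tau> y) x = - wdiv \<Omega> \<tau> x"
  using weak_div_unique wdiv_spec Hdiv_neg L2_neg by metis

lemma zero_Hdiv: "(\<lambda>x. 0::real^'n) \<in> Hdiv \<Omega>" "has_weak_div \<Omega> (\<lambda>x. 0::real^'n) (\<lambda>x. 0)"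
proof -
  have L0: "L2 \<Omega> (\<lambda>x. 0)" unfolding L2_def by simp
  show hw: "has_weak_div \<Omega> (\<lambda>x. 0::real^'n) (\<lambda>x. 0)" unfolding has_weak_div_def by simp
  show "(\<lambda>x. 0::real^'n) \<in> Hdiv \<Omega>" using L0 hw unfolding Hdiv_def L2v_def by auto
qed

lemma wdiv_zero_ae: "AE x in lebesgue_on \<Omega>. wdiv \<Omega> (\<lambda>y. 0::real^'n) x = 0"
proof -
  have L0: "L2 \<Omega> (\<lambda>x. 0)" unfolding L2_def by simp
  show ?thesis using weak_div_unique[OF wdiv_spec[OF zero_Hdiv(1), THEN conjunct2] zero_Hdiv(2)
      wdiv_spec[OF zero_Hdiv(1), THEN conjunct1] L0] .
qed

lemma int_Om_lborel:
  fixes F :: "real^'n \<Rightarrow> real"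
  assumes Fb: "F \<in> borel_measurable borel" and F0: "\<And>x. x \<notin> \<Omega> \<Longrightarrow> F x = 0"
  shows "(LINT x|lebesgue_on \<Omega>. F x) = (LINT x|lborel. F x)"
proof -
  have "(LINT x|lebesgue_on \<Omega>. F x) = (LINT x|lebesgue. indicator \<Omega> x *\<^sub>R F x)"
    using Om_sets by (subst integral_restrict_space) auto
  also have "\<dots> = (LINT x|lebesgue. F x)"
    using F0 by (intro Bochner_Integration.integral_cong) (auto split: split_indicator)
  also have "\<dots> = (LINT x|lborel. F x)" using Fb by (intro integral_completion) simp
  finally show ?thesis .
qed

end

lemma grad_zero_out:
  fixes \<phi> :: "real^'n::finite \<Rightarrow> real"
  shows "x \<notin> closure {x. \<phi> x \<noteq> 0} \<Longrightarrow> grad \<phi> x = 0"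
  unfolding grad_def by (simp add: vec_eq_iff pd_zero_out)

lemma aff_grad_meas:
  fixes \<phi> :: "real^'n::finite \<Rightarrow> real"
  assumes t: "test_fun U \<phi>"
  shows "(\<lambda>x. (a + b *\<^sub>R x) \<bullet> grad \<phi> x) \<in> borel_measurable borel"
proof -
  have "continuous_on UNIV (\<lambda>x. (\<Sum>i\<in>UNIV. (a + b *\<^sub>R x) $ i * pderiv_i i \<phi> x))"
    using test_pd(1)[OF t] by (intro continuous_intros) auto
  then show ?thesis unfolding grad_inner by (rule borel_measurable_continuous_onI)
qed

context meshctx
begin

lemma wdiv_elem:
  fixes a :: "real^'n" and b :: real
  assumes s: "\<sigma> \<in> Hdiv \<Omega>" and T: "T \<in> \<T>" and aff: "\<forall>x\<in>interior T. \<sigma> x = a + b *\<^sub>R x"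
  shows "AE x in lebesgue_on \<Omega>. x \<in> interior T \<longrightarrow> wdiv \<Omega> \<sigma> x = real CARD('n) * b"
proof -
  let ?n = "real CARD('n)"
  let ?V = "interior T \<inter> \<Omega>"
  have ws: "L2 \<Omega> (wdiv \<Omega> \<sigma>)" "has_weak_div \<Omega> \<sigma> (wdiv \<Omega> \<sigma>)" using wdiv_spec[OF s] by auto
  have wi: "integrable (lebesgue_on \<Omega>) (wdiv \<Omega> \<sigma>)" using L2_int[OF ws(1)] .
  have "AE x in lebesgue_on \<Omega>. x \<in> ?V \<longrightarrow> wdiv \<Omega> \<sigma> x - ?n * b = 0"
  proof (rule FL[OF Om_sets])
    show "integrable (lebesgue_on \<Omega>) (\<lambda>x. wdiv \<Omega> \<sigma> x - ?n * b)" using wi int_const by auto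
    show "open ?V" using opn by auto
    show "?V \<subseteq> \<Omega>" by auto
    fix \<phi> assume tV: "test_fun ?V \<phi>"
    have tO: "test_fun \<Omega> \<phi>" using test_mono[OF tV] by auto
    have sm: "smooth_fun \<phi>" and K: "compact (closure {x. \<phi> x \<noteq> 0})" and KV: "closure {x. \<phi> x \<noteq> 0} \<subseteq> ?V"
      using tV by (auto simp: test_fun_def)
    have p0: "x \<notin> closure {x. \<phi> x \<noteq> 0} \<Longrightarrow> \<phi> x = 0" for x using closure_subset[of "{x. \<phi> x \<noteq> 0}"] by auto
    have "(LINT x|lebesgue_on \<Omega>. \<sigma> x \<bullet> grad \<phi> x) = (LINT x|lebesgue_on \<Omega>. (a + b *\<^sub>R x) \<bullet> grad \<phi> x)"
    proof (rule Bochner_Integration.integral_cong[OF refl])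
      fix x assume "x \<in> space (lebesgue_on \<Omega>)"
      show "\<sigma> x \<bullet> grad \<phi> x = (a + b *\<^sub>R x) \<bullet> grad \<phi> x"
      proof (cases "x \<in> closure {x. \<phi> x \<noteq> 0}")
        case True then show ?thesis using KV aff by auto
      next
        case False then show ?thesis using grad_zero_out[OF False] by simp
      qed
    qed
    also have "\<dots> = (LINT x|lborel. (a + b *\<^sub>R x) \<bullet> grad \<phi> x)"
    proof (rule int_Om_lborel[OF aff_grad_meas[OF tV]])
      fix x assume "x \<notin> \<Omega>"
      then have "x \<notin> closure {x. \<phi> x \<noteq> 0}" using KV by blast
      then show "(a + b *\<^sub>R x) \<bullet> grad \<phi> x = 0" by (simp add: grad_zero_out)
    qed
    also have "\<dots> = - (?n * b) * (LINT x|lborel. \<phi> x)" by (rule affine_div[OF sm K])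
    also have "(LINT x|lborel. \<phi> x) = (LINT x|lebesgue_on \<Omega>. \<phi> x)"
    proof (rule int_Om_lborel[symmetric, OF borel_measurable_continuous_onI[OF test_cont[OF tV]]])
      fix x assume "x \<notin> \<Omega>"
      then have "x \<notin> closure {x. \<phi> x \<noteq> 0}" using KV by blast
      then show "\<phi> x = 0" by (rule p0)
    qed
    finally have e1: "(LINT x|lebesgue_on \<Omega>. \<sigma> x \<bullet> grad \<phi> x) = - (?n * b) * (LINT x|lebesgue_on \<Omega>. \<phi> x)" .
    have e2: "(LINT x|lebesgue_on \<Omega>. \<sigma> x \<bullet> grad \<phi> x) = - (LINT x|lebesgue_on \<Omega>. wdiv \<Omega> \<sigma> x * \<phi> x)"
      using ws(2) tO unfolding has_weak_div_def by blast
    have i1: "integrable (lebesgue_on \<Omega>) (\<lambda>x. wdiv \<Omega> \<sigma> x * \<phi> x)" by (rule test_int_mult[OF wi tO])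
    have i2: "integrable (lebesgue_on \<Omega>) (\<lambda>x. \<phi> x)" using test_int_mult[OF int_const[of 1] tO] by simp
    have "(LINT x|lebesgue_on \<Omega>. (wdiv \<Omega> \<sigma> x - ?n * b) * \<phi> x)
        = (LINT x|lebesgue_on \<Omega>. wdiv \<Omega> \<sigma> x * \<phi> x) - ?n * b * (LINT x|lebesgue_on \<Omega>. \<phi> x)"
      using i1 i2 by (simp add: left_diff_distrib)
    then show "(LINT x|lebesgue_on \<Omega>. (wdiv \<Omega> \<sigma> x - ?n * b) * \<phi> x) = 0"
      using e1 e2 by simp
  qed
  then show ?thesis using AE_space[of "lebesgue_on \<Omega>"] by eventually_elim auto
qed

end

context meshctx
begin

definition IT :: "(real^'n) set \<Rightarrow> (real^'n \<Rightarrow> real) \<Rightarrow> real" where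
  "IT T F = (LINT x|lebesgue_on \<Omega>. indicator (interior T) x * F x)"

lemma IT_int: "integrable (lebesgue_on \<Omega>) (F::real^'n \<Rightarrow> real) \<Longrightarrow> integrable (lebesgue_on \<Omega>) (\<lambda>x. indicator (interior T) x * F x)"
proof -
  assume F: "integrable (lebesgue_on \<Omega>) (F::real^'n \<Rightarrow> real)"
  have m: "indicator (interior T) \<in> borel_measurable (lebesgue_on \<Omega>)"
    by (intro bor_leb_on borel_measurable_indicator) simp
  have "integrable (lebesgue_on \<Omega>) (\<lambda>x. F x * indicator (interior T) x)"
    by (rule int_bdd_mult[OF F m, where C=1]) (simp split: split_indicator)
  then show ?thesis by (simp add: mult.commute)
qed

lemma IT_diff: "integrable (lebesgue_on \<Omega>) F \<Longrightarrow> integrable (lebesgue_on \<Omega>) G \<Longrightarrow> IT T (\<lambda>x. F x - G x) = IT T F - IT T G"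
  unfolding IT_def using IT_int[of F T] IT_int[of G T] by (simp add: right_diff_distrib)

lemma IT_P0: "v \<in> P0 \<T> \<Longrightarrow> T \<in> \<T> \<Longrightarrow> IT T v = cT T v * mT T"
proof -
  assume v: "v \<in> P0 \<T>" and T: "T \<in> \<T>"
  have "IT T v = (LINT x|lebesgue_on \<Omega>. cT T v * indicator (interior T) x)"
    unfolding IT_def using P0_val[OF v T] by (intro Bochner_Integration.integral_cong) (auto split: split_indicator)
  then show ?thesis by (simp add: mT_def)
qed

lemma ip_comm: "ip \<Omega> F G = ip \<Omega> G F" unfolding ip_def by (simp add: mult.commute)

lemma ip_P0': "v \<in> P0 \<T> \<Longrightarrow> integrable (lebesgue_on \<Omega>) F \<Longrightarrow> ip \<Omega> v F = (\<Sum>T\<in>\<T>. cT T v * IT T F)"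
  using ip_P0 by (simp add: IT_def)

lemma pc_int: "integrable (lebesgue_on \<Omega>) (pc \<T> c)"
  using int_bdd_mult[OF int_const[of 1] pc_meas pc_bdd] by simp

lemma pc_P0: "pc \<T> c \<in> P0 \<T>"
  unfolding P0_def using pc_val by blast

lemma Pi0_val:
  assumes F: "integrable (lebesgue_on \<Omega>) F" and T: "T \<in> \<T>" and x: "x \<in> interior T"
  shows "Pi0 \<T> \<Omega> F x = IT T F / mT T"
proof -
  define p where "p = pc \<T> (\<lambda>T. IT T F / mT T)"
  have pP: "p \<in> P0 \<T>" unfolding p_def by (rule pc_P0)
  have pi: "integrable (lebesgue_on \<Omega>) p" unfolding p_def by (rule pc_int)
  have cp: "cT T' p = IT T' F / mT T'" if "T' \<in> \<T>" for T'
  proof -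
    have "(SOME y. y \<in> interior T') \<in> interior T'" using int_ne[OF that] some_in_eq by blast
    then show ?thesis unfolding cT_def p_def using pc_val[OF that] by blast
  qed
  have orth: "\<forall>v\<in>P0 \<T>. ip \<Omega> (\<lambda>x. F x - p x) v = 0"
  proof
    fix v assume v: "v \<in> P0 \<T>"
    have "ip \<Omega> (\<lambda>x. F x - p x) v = (\<Sum>T\<in>\<T>. cT T v * IT T (\<lambda>x. F x - p x))"
      using ip_P0'[OF v] F pi by (subst ip_comm) auto
    also have "\<dots> = 0"
    proof (rule sum.neutral, intro ballI)
      fix T' assume T': "T' \<in> \<T>"
      have "IT T' (\<lambda>x. F x - p x) = IT T' F - IT T' F / mT T' * mT T'"
        using IT_diff[OF F pi] IT_P0[OF pP T'] cp[OF T'] by simp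
      also have "\<dots> = 0" using mT_pos[OF T'] by simp
      finally show "cT T' v * IT T' (\<lambda>x. F x - p x) = 0" by simp
    qed
    finally show "ip \<Omega> (\<lambda>x. F x - p x) v = 0" .
  qed
  have "Pi0 \<T> \<Omega> F \<in> P0 \<T> \<and> (\<forall>v\<in>P0 \<T>. ip \<Omega> (\<lambda>x. F x - Pi0 \<T> \<Omega> F x) v = 0)"
    unfolding Pi0_def by (rule someI[where x=p]) (use pP orth in blast)
  then have PP: "Pi0 \<T> \<Omega> F \<in> P0 \<T>" and PO: "ip \<Omega> (\<lambda>x. F x - Pi0 \<T> \<Omega> F x) (indicator (interior T)) = 0"
    using ind_P0[OF T] by auto
  have Pi: "integrable (lebesgue_on \<Omega>) (Pi0 \<T> \<Omega> F)"
    using P0_int_mult[OF PP int_const[of 1]] by simp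
  have "ip \<Omega> (\<lambda>x. F x - Pi0 \<T> \<Omega> F x) (indicator (interior T)) = IT T (\<lambda>x. F x - Pi0 \<T> \<Omega> F x)"
    unfolding ip_def IT_def by (simp add: mult.commute)
  also have "\<dots> = IT T F - cT T (Pi0 \<T> \<Omega> F) * mT T"
    using IT_diff[OF F Pi] IT_P0[OF PP T] by simp
  finally have "cT T (Pi0 \<T> \<Omega> F) = IT T F / mT T"
    using PO mT_pos[OF T] by (simp add: field_simps)
  then show ?thesis using P0_val[OF PP T x] by simp
qed

end

theorem proposition3p3:
  fixes \<Omega> :: "(real^'n::finite) set"
    and \<T> :: "(real^'n) set set"
    and f g u\<^sub>h lam\<^sub>h :: "real^'n \<Rightarrow> real"
    and \<sigma>\<^sub>h :: "real^'n \<Rightarrow> real^'n"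
  assumes dim: "CARD('n) = 2 \<or> CARD('n) = 3"
    and dom: "lipschitz_domain \<Omega>"
    and mesh: "conforming_simplicial_mesh \<T> \<Omega>"
    and f: "L2 \<Omega> f"
    and g_H1: "g \<in> H1 \<Omega>" and g_cont: "continuous_on (closure \<Omega>) g"
    and g_bdry: "\<forall>x\<in>frontier \<Omega>. g x \<le> 0"
    and sol_K: "(\<sigma>\<^sub>h, lam\<^sub>h) \<in> Kh \<T> \<Omega>" and sol_M: "u\<^sub>h \<in> P0 \<T>"
    and VI: "\<forall>(\<tau>, \<mu>) \<in> Kh \<T> \<Omega>.
               ipv \<Omega> \<sigma>\<^sub>h (\<lambda>x. \<tau> x - \<sigma>\<^sub>h x)
               + ip \<Omega> (\<lambda>x. wdiv \<Omega> (\<lambda>y. \<tau> y - \<sigma>\<^sub>h y) x + \<mu> x - lam\<^sub>h x) u\<^sub>h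
             \<ge> ip \<Omega> (\<lambda>x. \<mu> x - lam\<^sub>h x) g"
    and EQ: "\<forall>v \<in> P0 \<T>. ip \<Omega> (\<lambda>x. wdiv \<Omega> \<sigma>\<^sub>h x + lam\<^sub>h x) v = - ip \<Omega> f v"
  shows "(AE x in lebesgue_on \<Omega>. wdiv \<Omega> \<sigma>\<^sub>h x + lam\<^sub>h x = - Pi0 \<T> \<Omega> f x)
       \<and> (\<forall>\<tau> \<in> RT0 \<T> \<Omega>. ipv \<Omega> \<sigma>\<^sub>h \<tau> + ip \<Omega> (wdiv \<Omega> \<tau>) u\<^sub>h = 0)
       \<and> ip \<Omega> lam\<^sub>h (\<lambda>x. u\<^sub>h x - g x) = 0
       \<and> (AE x in lebesgue_on \<Omega>. lam\<^sub>h x * (u\<^sub>h x - Pi0 \<T> \<Omega> g x) = 0)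
       \<and> (AE x in lebesgue_on \<Omega>. u\<^sub>h x - Pi0 \<T> \<Omega> g x \<ge> 0)"
proof -
  have opn: "open \<Omega>" and bdd: "bounded \<Omega>" using dom by (auto simp: lipschitz_domain_def)
  interpret meshctx \<Omega> \<T> using mesh opn bdd by unfold_locales
  let ?s = "\<sigma>\<^sub>h" and ?l = "lam\<^sub>h" and ?u = "u\<^sub>h"
  have sRT: "?s \<in> RT0 \<T> \<Omega>" and lP: "?l \<in> P0 \<T>" and lnn: "\<forall>T\<in>\<T>. \<forall>x\<in>interior T. ?l x \<ge> 0"
    using sol_K by (auto simp: Kh_def)
  have sH: "?s \<in> Hdiv \<Omega>" using sRT by (simp add: RT0_def)
  have fi: "integrable (lebesgue_on \<Omega>) f" using L2_int[OF f] .
  have gi: "integrable (lebesgue_on \<Omega>) g" using g_H1 L2_int by (auto simp: H1_def)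
  have ui: "integrable (lebesgue_on \<Omega>) ?u" using P0_int_mult[OF sol_M int_const[of 1]] by simp
  have um: "?u \<in> borel_measurable (lebesgue_on \<Omega>)" using P0_meas[OF sol_M] .
  have VI': "ipv \<Omega> ?s (\<lambda>x. \<tau> x - ?s x) + ip \<Omega> (\<lambda>x. wdiv \<Omega> (\<lambda>y. \<tau> y - ?s y) x + \<mu> x - ?l x) ?u
      \<ge> ip \<Omega> (\<lambda>x. \<mu> x - ?l x) g" if "(\<tau>, \<mu>) \<in> Kh \<T> \<Omega>" for \<tau> \<mu>
    using VI that by blast
  have partii: "ipv \<Omega> ?s \<tau> + ip \<Omega> (wdiv \<Omega> \<tau>) ?u = 0" if tRT: "\<tau> \<in> RT0 \<T> \<Omega>" for \<tau>
  proof -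
    have tH: "\<tau> \<in> Hdiv \<Omega>" using tRT by (simp add: RT0_def)
    have "(\<lambda>x. ?s x + \<tau> x, ?l) \<in> Kh \<T> \<Omega>" using RT0_add[OF sRT tRT] lP lnn by (simp add: Kh_def)
    from VI'[OF this] have A: "ipv \<Omega> ?s \<tau> + ip \<Omega> (wdiv \<Omega> \<tau>) ?u \<ge> 0"
      by (simp add: ip_def)
    have "(\<lambda>x. ?s x + - \<tau> x, ?l) \<in> Kh \<T> \<Omega>" using RT0_add[OF sRT RT0_neg[OF tRT]] lP lnn by (simp add: Kh_def)
    from VI'[OF this] have B0: "ipv \<Omega> ?s (\<lambda>x. - \<tau> x) + ip \<Omega> (wdiv \<Omega> (\<lambda>y. - \<tau> y)) ?u \<ge> 0"
      by (simp add: ip_def)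
    have e1: "ipv \<Omega> ?s (\<lambda>x. - \<tau> x) = - ipv \<Omega> ?s \<tau>" unfolding ipv_def by simp
    have e2: "ip \<Omega> (wdiv \<Omega> (\<lambda>y. - \<tau> y)) ?u = - ip \<Omega> (wdiv \<Omega> \<tau>) ?u"
    proof -
      have m1: "wdiv \<Omega> (\<lambda>y. - \<tau> y) \<in> borel_measurable (lebesgue_on \<Omega>)"
        using wdiv_spec[OF Hdiv_neg(1)[OF tH]] by (simp add: L2_def)
      have m2: "wdiv \<Omega> \<tau> \<in> borel_measurable (lebesgue_on \<Omega>)"
        using wdiv_spec[OF tH] by (simp add: L2_def)
      have "AE x in lebesgue_on \<Omega>. wdiv \<Omega> (\<lambda>y. - \<tau> y) x * ?u x = - wdiv \<Omega> \<tau> x * ?u x"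
        using wdiv_neg_ae[OF tH] by eventually_elim simp
      then have "ip \<Omega> (wdiv \<Omega> (\<lambda>y. - \<tau> y)) ?u = (LINT x|lebesgue_on \<Omega>. - wdiv \<Omega> \<tau> x * ?u x)"
        unfolding ip_def using m1 m2 um by (intro integral_cong_AE) auto
      then show ?thesis unfolding ip_def by simp
    qed
    show ?thesis using A B0 e1 e2 by simp
  qed
  define D where "D T = IT T ?u - IT T g" for T
  have KEY: "(\<Sum>T\<in>\<T>. (cT T \<mu> - cT T ?l) * D T) \<ge> 0"
    if mP: "\<mu> \<in> P0 \<T>" and mnn: "\<forall>T\<in>\<T>. \<forall>x\<in>interior T. \<mu> x \<ge> 0" for \<mu>
  proof -
    have "(?s, \<mu>) \<in> Kh \<T> \<Omega>" using sRT mP mnn by (simp add: Kh_def)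
    from VI'[OF this] have V: "ipv \<Omega> ?s (\<lambda>x. 0) + ip \<Omega> (\<lambda>x. wdiv \<Omega> (\<lambda>y. 0) x + \<mu> x - ?l x) ?u
        \<ge> ip \<Omega> (\<lambda>x. \<mu> x - ?l x) g" by simp
    have z: "ipv \<Omega> ?s (\<lambda>x. 0) = 0" unfolding ipv_def by simp
    have mlP: "(\<lambda>x. \<mu> x - ?l x) \<in> P0 \<T>" using P0_diff[OF mP lP] .
    have e: "ip \<Omega> (\<lambda>x. wdiv \<Omega> (\<lambda>y. 0) x + \<mu> x - ?l x) ?u = ip \<Omega> (\<lambda>x. \<mu> x - ?l x) ?u"
    proof -
      have m0: "wdiv \<Omega> (\<lambda>y. 0::real^'n) \<in> borel_measurable (lebesgue_on \<Omega>)"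
        using wdiv_spec[OF zero_Hdiv(1)] by (simp add: L2_def)
      have "AE x in lebesgue_on \<Omega>. (wdiv \<Omega> (\<lambda>y. 0) x + \<mu> x - ?l x) * ?u x = (\<mu> x - ?l x) * ?u x"
        using wdiv_zero_ae by eventually_elim simp
      then show ?thesis unfolding ip_def using m0 P0_meas[OF mP] P0_meas[OF lP] um
        by (intro integral_cong_AE) auto
    qed
    have cd: "cT T (\<lambda>x. \<mu> x - ?l x) = cT T \<mu> - cT T ?l" for T by (simp add: cT_def)
    have "ip \<Omega> (\<lambda>x. \<mu> x - ?l x) ?u = (\<Sum>T\<in>\<T>. (cT T \<mu> - cT T ?l) * IT T ?u)"
      using ip_P0'[OF mlP ui] cd by simp
    moreover have "ip \<Omega> (\<lambda>x. \<mu> x - ?l x) g = (\<Sum>T\<in>\<T>. (cT T \<mu> - cT T ?l) * IT T g)"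
      using ip_P0'[OF mlP gi] cd by simp
    ultimately have "(\<Sum>T\<in>\<T>. (cT T \<mu> - cT T ?l) * IT T g) \<le> (\<Sum>T\<in>\<T>. (cT T \<mu> - cT T ?l) * IT T ?u)"
      using V z e by simp
    then show ?thesis unfolding D_def by (simp add: right_diff_distrib sum_subtractf)
  qed
  have lT: "cT T ?l \<ge> 0" if T: "T \<in> \<T>" for T
  proof -
    have "(SOME y. y \<in> interior T) \<in> interior T" using int_ne[OF T] some_in_eq by blast
    then show ?thesis using lnn T unfolding cT_def by blast
  qed
  have Dnn: "D T0 \<ge> 0" if T0: "T0 \<in> \<T>" for T0
  proof -
    have mP: "(\<lambda>x. ?l x + indicator (interior T0) x) \<in> P0 \<T>" using P0_add[OF lP ind_P0[OF T0]] .
    have mnn: "\<forall>T\<in>\<T>. \<forall>x\<in>interior T. ?l x + indicator (interior T0) x \<ge> 0"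
      using lnn by (auto split: split_indicator)
    have "cT T (\<lambda>x. ?l x + indicator (interior T0) x) - cT T ?l = (if T = T0 then 1 else 0)" if "T \<in> \<T>" for T
      using cT_ind[OF T0 that] by (simp add: cT_def)
    then have "(\<Sum>T\<in>\<T>. (cT T (\<lambda>x. ?l x + indicator (interior T0) x) - cT T ?l) * D T) = (\<Sum>T\<in>\<T>. if T = T0 then D T else 0)"
      by (intro sum.cong) auto
    also have "\<dots> = D T0" using T0 finT by simp
    finally show ?thesis using KEY[OF mP mnn] by simp
  qed
  have lD0: "(\<Sum>T\<in>\<T>. cT T ?l * D T) = 0"
  proof -
    have a: "(\<Sum>T\<in>\<T>. (cT T (\<lambda>x. 0) - cT T ?l) * D T) \<ge> 0" using KEY[OF P0_const] by simp
    have b: "(\<Sum>T\<in>\<T>. (cT T (\<lambda>x. ?l x + ?l x) - cT T ?l) * D T) \<ge> 0"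
      using KEY[OF P0_add[OF lP lP]] lnn by force
    have ca: "cT T (\<lambda>x. 0) = 0" for T by (simp add: cT_def)
    have cb: "cT T (\<lambda>x. ?l x + ?l x) - cT T ?l = cT T ?l" for T by (simp add: cT_def)
    show ?thesis using a b unfolding ca cb by (simp add: sum_negf)
  qed
  have lD: "cT T ?l * D T = 0" if T: "T \<in> \<T>" for T
    using sum_nonneg_eq_0_iff[OF finT, of "\<lambda>T. cT T ?l * D T"] lD0 lT Dnn T by (auto intro: mult_nonneg_nonneg)
  have partiii: "ip \<Omega> ?l (\<lambda>x. ?u x - g x) = 0"
  proof -
    have "ip \<Omega> ?l (\<lambda>x. ?u x - g x) = (\<Sum>T\<in>\<T>. cT T ?l * IT T (\<lambda>x. ?u x - g x))"
      using ip_P0'[OF lP] ui gi by auto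
    also have "\<dots> = (\<Sum>T\<in>\<T>. cT T ?l * D T)" unfolding D_def using IT_diff[OF ui gi] by simp
    finally show ?thesis using lD0 by simp
  qed
  have uval: "IT T ?u = cT T ?u * mT T" if "T \<in> \<T>" for T using IT_P0[OF sol_M that] .
  have gap: "?u x - Pi0 \<T> \<Omega> g x = D T / mT T" if T: "T \<in> \<T>" and x: "x \<in> interior T" for T x
  proof -
    have "?u x - Pi0 \<T> \<Omega> g x = cT T ?u - IT T g / mT T"
      using P0_val[OF sol_M T x] Pi0_val[OF gi T x] by simp
    also have "\<dots> = D T / mT T" using mT_pos[OF T] uval[OF T] by (simp add: D_def field_simps)
    finally show ?thesis .
  qed
  have partiv: "AE x in lebesgue_on \<Omega>. ?u x - Pi0 \<T> \<Omega> g x \<ge> 0"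
    using ae_in_int
  proof eventually_elim
    case (elim x)
    then obtain T where T: "T \<in> \<T>" "x \<in> interior T" by blast
    show ?case using gap[OF T] Dnn[OF T(1)] mT_pos[OF T(1)] by simp
  qed
  have partiii2: "AE x in lebesgue_on \<Omega>. ?l x * (?u x - Pi0 \<T> \<Omega> g x) = 0"
    using ae_in_int
  proof eventually_elim
    case (elim x)
    then obtain T where T: "T \<in> \<T>" "x \<in> interior T" by blast
    have "?l x * (?u x - Pi0 \<T> \<Omega> g x) = cT T ?l * D T / mT T"
      using gap[OF T] P0_val[OF lP T] by simp
    then show ?case using lD[OF T(1)] by simp
  qed
  have ex: "\<forall>T\<in>\<T>. \<exists>p. \<forall>x\<in>interior T. ?s x = fst p + snd p *\<^sub>R x"
  proof
    fix T assume T: "T \<in> \<T>"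
    obtain a b where "\<forall>x\<in>interior T. ?s x = a + b *\<^sub>R x" using sRT T unfolding RT0_def by blast
    then show "\<exists>p. \<forall>x\<in>interior T. ?s x = fst p + snd p *\<^sub>R x" by (intro exI[of _ "(a, b)"]) simp
  qed
  obtain ab where ab: "\<forall>T\<in>\<T>. \<forall>x\<in>interior T. ?s x = fst (ab T) + snd (ab T) *\<^sub>R x"
    using bchoice[OF ex] by blast
  let ?n = "real CARD('n)"
  have aediv: "AE x in lebesgue_on \<Omega>. \<forall>T\<in>\<T>. x \<in> interior T \<longrightarrow> wdiv \<Omega> ?s x = ?n * snd (ab T)"
    using ab finT by (subst AE_finite_all) (auto intro!: wdiv_elem[OF sH])
  have wm: "wdiv \<Omega> ?s \<in> borel_measurable (lebesgue_on \<Omega>)" using wdiv_spec[OF sH] by (simp add: L2_def)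
  have qval: "?n * snd (ab T) + cT T ?l = - IT T f / mT T" if T: "T \<in> \<T>" for T
  proof -
    have "ip \<Omega> (\<lambda>x. wdiv \<Omega> ?s x + ?l x) (indicator (interior T)) = - ip \<Omega> f (indicator (interior T))"
      using EQ ind_P0[OF T] by blast
    moreover have "ip \<Omega> f (indicator (interior T)) = IT T f" unfolding ip_def IT_def by (simp add: mult.commute)
    moreover have "ip \<Omega> (\<lambda>x. wdiv \<Omega> ?s x + ?l x) (indicator (interior T)) = (?n * snd (ab T) + cT T ?l) * mT T"
    proof -
      have "AE x in lebesgue_on \<Omega>. (wdiv \<Omega> ?s x + ?l x) * indicator (interior T) x
          = (?n * snd (ab T) + cT T ?l) * indicator (interior T) x"
        using aediv
      proof eventually_elim
        case (elim x)
        then show ?case using T P0_val[OF lP T, of x] by (auto split: split_indicator)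
      qed
      then have "ip \<Omega> (\<lambda>x. wdiv \<Omega> ?s x + ?l x) (indicator (interior T))
          = (LINT x|lebesgue_on \<Omega>. (?n * snd (ab T) + cT T ?l) * indicator (interior T) x)"
        unfolding ip_def using wm P0_meas[OF lP] bor_leb_on[OF borel_measurable_indicator[of "interior T"]]
        by (intro integral_cong_AE borel_measurable_times borel_measurable_add borel_measurable_const) auto
      then show ?thesis by (simp add: mT_def)
    qed
    ultimately show ?thesis using mT_pos[OF T] by (simp add: field_simps)
  qed
  have parti: "AE x in lebesgue_on \<Omega>. wdiv \<Omega> ?s x + ?l x = - Pi0 \<T> \<Omega> f x"
    using ae_in_int aediv
  proof eventually_elim
    case (elim x)
    then obtain T where T: "T \<in> \<T>" "x \<in> interior T" by blast
    then have "wdiv \<Omega> ?s x = ?n * snd (ab T)" using elim by blast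
    then show ?case using qval[OF T(1)] P0_val[OF lP T] Pi0_val[OF fi T] by simp
  qed
  show ?thesis using parti partii partiii partiii2 partiv by blast
qed

end
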